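(* Let $r\ge 1$ and $p_1,\dots,p_r\ge 1$, and let $(\mathbb{Z}_t)_{t\in\mathbb{Z}}$ be a tensor-valued time series with $\mathbb{Z}_t\in\mathbb{R}^{p_1\times\cdots\times p_r}$ (with finite fourth moments, so that all expectations below exist). Suppose the observed series is $$\mathbb{X}_t=\mathbb{Z}_t\odot_1\boldsymbol{\Omega}_1\odot_2\boldsymbol{\Omega}_2\cdots\odot_r\boldsymbol{\Omega}_r,\qquad t=0,\pm1,\pm2,\dots,$$ where each $\boldsymbol{\Omega}_m\in\mathbb{R}^{p_m\times p_m}$ is non-singular, and that for all $t$: $\mathrm{E}[\mathrm{vec}(\mathbb{Z}_t)]=\mathbf{0}$ and $\mathrm{Cov}[\mathrm{vec}(\mathbb{Z}_t)]=\mathbf{I}$. Let $\mathcal{T}$ be a fixed set of lags. Let $\mathbb{X}^{st}_t:=\mathbb{X}_t\odot_1(\boldsymbol{\Sigma}^1_0(\mathbb{X}_t))^{-1/2}\cdots\odot_r(\boldsymbol{\Sigma}^r_0(\mathbb{X}_t))^{-1/2}$ be the standardized series, and let $c>0$ and orthogonal matrices $\mathbf{U}_m\in\mathbb{R}^{p_m\times p_m}$, $m=1,\dots,r$, be such that $\mathbb{X}^{st}_t=c\,\mathbb{Z}_t\odot_1\mathbf{U}_1\cdots\odot_r\mathbf{U}_r$ for all $t$ (such $c$ and $\mathbf{U}_m$ exist under the stated assumptions). Assume additionally one of the following: (i) for all $m=1,\dots,r$ and $\tau\in\mathcal{T}$, the matrix $\boldsymbol{\Sigma}^m_\tau(\mathbb{Z}_t)$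 is diagonal; (ii) for all $m=1,\dots,r$ and $\tau\in\mathcal{T}$, the matrix $\mathbf{B}^m_\tau(\mathbb{Z}_t)$ is diagonal; (iii) for all $m=1,\dots,r$, $i,j=1,\dots,p_m$ and $\tau\in\mathcal{T}$, the matrix $\mathbf{C}^m_{\tau ij}(\mathbb{Z}_t)$ is diagonal. Then for each fixed mode $m=1,\dots,r$, the matrix $\mathbf{U}_m^T$ diagonalizes (i.e. $\mathbf{U}_m^T\mathbf{M}\mathbf{U}_m$ is diagonal), respectively: in case (i) the matrices $\boldsymbol{\Sigma}^m_\tau(\mathbb{X}^{st}_t)$, $\tau\in\mathcal{T}$; in case (ii) the matrices $\mathbf{B}^m_\tau(\mathbb{X}^{st}_t)$, $\tau\in\mathcal{T}$; in case (iii) the matrices $\mathbf{C}^m_{\tau ij}(\mathbb{X}^{st}_t)$, $\tau\in\mathcal{T}$, $i,j=1,\dots,p_m$.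
   Context: Tensor notation: for $\mathbb{X}\in\mathbb{R}^{p_1\times\cdots\times p_r}$, the $m$-mode vectors are obtained by fixing all indices except the $m$-th and letting the $m$-th vary; there are $\rho_m:=\prod_{i\ne m}p_i$ of them, each of length $p_m$. The $m$-flattening $\mathbf{X}^{(m)}\in\mathbb{R}^{p_m\times\rho_m}$ is the matrix obtained by stacking all $m$-mode vectors as columns in a fixed, consistent order. For $\mathbf{A}\in\mathbb{R}^{p_m\times p_m}$, $\mathbb{X}\odot_m\mathbf{A}$ is the tensor of the same size with entries $(\mathbb{X}\odot_m\mathbf{A})_{i_1\cdots i_r}=\sum_{j}x_{i_1\cdots i_{m-1}\,j\,i_{m+1}\cdots i_r}a_{i_m j}$, equivalently $(\mathbb{X}\odot_m\mathbf{A})^{(m)}=\mathbf{A}\mathbf{X}^{(m)}$; $\mathbb{X}\odot_1\mathbf{A}_1\cdots\odot_r\mathbf{A}_r$ means applying these successively. $\mathrm{vec}$ denotes vectorization. $\mathbf{e}_i$ is the $i$-th standard basis vector of $\mathbb{R}^{p_m}$, $\mathbf{E}^{ij}:=\mathbf{e}_i\mathbf{e}_j^T$, and $\mathbf{M}^{-1/2}$ denotes the unique symmetric positive definite inverse square root. For a tensor-valued series $\mathbb{X}_t$ with $m$-flattenings $\mathbf{X}^{(m)}_t$, define the $p_m\times p_m$ matrices $\boldsymbol{\Sigma}^m_\tau(\mathbb{X}_t):=\frac{1}{\rho_m}\mathrm{E}[\mathbf{X}^{(m)}_t(\mathbf{X}^{(m)}_{t+\tau})^T]$ (so $\boldsymbol{\Sigma}^m_0$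 is the $m$-mode covariance matrix), $\mathbf{B}^m_\tau(\mathbb{X}_t):=\frac{1}{\rho_m}\mathrm{E}[\mathbf{X}^{(m)}_t(\mathbf{X}^{(m)}_{t+\tau})^T\mathbf{X}^{(m)}_{t+\tau}(\mathbf{X}^{(m)}_t)^T]$, for lags $\tau_1,\tau_2,\tau_3,\tau_4$ and $i,j=1,\dots,p_m$: $\mathbf{B}^m_{\tau_1\tau_2\tau_3\tau_4 ij}(\mathbb{X}_t):=\frac{1}{\rho_m}\mathrm{E}\big[(\mathbf{e}_i^T\mathbf{X}^{(m)}_{t+\tau_1}(\mathbf{X}^{(m)}_{t+\tau_2})^T\mathbf{e}_j)\cdot\mathbf{X}^{(m)}_{t+\tau_3}(\mathbf{X}^{(m)}_{t+\tau_4})^T\big]$, and $\mathbf{C}^m_{\tau ij}(\mathbb{X}_t):=\mathbf{B}^m_{0\tau\tau0ij}(\mathbb{X}_t)+\mathbf{B}^m_{0\tau0\tau ij}(\mathbb{X}_t)-\mathbf{B}^m_{\tau\tau00ij}(\mathbb{X}_t)-\boldsymbol{\Sigma}^m_0(\mathbb{X}_t)(\mathbf{E}^{ij}+\mathbf{E}^{ji}+\mathbf{I})\boldsymbol{\Sigma}^m_0(\mathbb{X}_t)^T$. *)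

theory Defs
  imports "HOL-Probability.Probability" "Jordan_Normal_Form.Matrix"
begin

text \<open>Tensors of shape ps = [p_1,...,p_r] are functions from index lists to reals;
  indices are 0-based, modes are 0-based (mode m of the paper is m-1 here).\<close>

type_synonym tensor = "nat list \<Rightarrow> real"

definition tidx :: "nat list \<Rightarrow> nat list set" where
  "tidx ps = {is. length is = length ps \<and> (\<forall>k<length ps. is ! k < ps ! k)}"

definition other_dims :: "nat list \<Rightarrow> nat \<Rightarrow> nat list" where
  "other_dims ps m = take m ps @ drop (Suc m) ps"

definition rho :: "nat list \<Rightarrow> nat \<Rightarrow> nat" where
  "rho ps m = prod_list (other_dims ps m)"

text \<open>Mixed-radix decoding of a column number into the multi-index of the other modes
  (fixes the consistent column order of the flattening).\<close>
fun mr_decode :: "nat list \<Rightarrow> nat \<Rightarrow> nat list" where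
  "mr_decode [] k = []"
| "mr_decode (q # qs) k = (k mod q) # mr_decode qs (k div q)"

definition ins_at :: "nat \<Rightarrow> nat \<Rightarrow> nat list \<Rightarrow> nat list" where
  "ins_at m i c = take m c @ [i] @ drop m c"

definition flat :: "nat list \<Rightarrow> nat \<Rightarrow> tensor \<Rightarrow> real mat" where
  "flat ps m X = mat (ps ! m) (rho ps m)
      (\<lambda>(i, k). X (ins_at m i (mr_decode (other_dims ps m) k)))"

definition mode_prod :: "nat list \<Rightarrow> nat \<Rightarrow> tensor \<Rightarrow> real mat \<Rightarrow> tensor" where
  "mode_prod ps m X A = (\<lambda>is. \<Sum>j<ps ! m. X (is[m := j]) * A $$ (is ! m, j))"

definition mode_prods :: "nat list \<Rightarrow> (nat \<Rightarrow> real mat) \<Rightarrow> tensor \<Rightarrow> tensor" where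
  "mode_prods ps As X = foldl (\<lambda>Y m. mode_prod ps m Y (As m)) X [0..<length ps]"

definition mat_expect :: "'a measure \<Rightarrow> nat \<Rightarrow> nat \<Rightarrow> ('a \<Rightarrow> real mat) \<Rightarrow> real mat" where
  "mat_expect M n k F = mat n k (\<lambda>(i, j). integral\<^sup>L M (\<lambda>\<omega>. F \<omega> $$ (i, j)))"

definition Sigma_m :: "'a measure \<Rightarrow> nat list \<Rightarrow> nat \<Rightarrow> (int \<Rightarrow> 'a \<Rightarrow> tensor) \<Rightarrow> int \<Rightarrow> int \<Rightarrow> real mat" where
  "Sigma_m M ps m X t \<tau> = (1 / real (rho ps m)) \<cdot>\<^sub>m
     mat_expect M (ps ! m) (ps ! m)
       (\<lambda>\<omega>. flat ps m (X t \<omega>) * transpose_mat (flat ps m (X (t + \<tau>) \<omega>)))"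

definition B_m :: "'a measure \<Rightarrow> nat list \<Rightarrow> nat \<Rightarrow> (int \<Rightarrow> 'a \<Rightarrow> tensor) \<Rightarrow> int \<Rightarrow> int \<Rightarrow> real mat" where
  "B_m M ps m X t \<tau> = (1 / real (rho ps m)) \<cdot>\<^sub>m
     mat_expect M (ps ! m) (ps ! m)
       (\<lambda>\<omega>. flat ps m (X t \<omega>) * transpose_mat (flat ps m (X (t + \<tau>) \<omega>))
             * flat ps m (X (t + \<tau>) \<omega>) * transpose_mat (flat ps m (X t \<omega>)))"

text \<open>B^m_{tau1 tau2 tau3 tau4 ij}(X_t); note e_i^T A e_j = A_{ij}.\<close>
definition B4_m :: "'a measure \<Rightarrow> nat list \<Rightarrow> nat \<Rightarrow> (int \<Rightarrow> 'a \<Rightarrow> tensor) \<Rightarrow> int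
    \<Rightarrow> int \<Rightarrow> int \<Rightarrow> int \<Rightarrow> int \<Rightarrow> nat \<Rightarrow> nat \<Rightarrow> real mat" where
  "B4_m M ps m X t \<tau>1 \<tau>2 \<tau>3 \<tau>4 i j = (1 / real (rho ps m)) \<cdot>\<^sub>m
     mat_expect M (ps ! m) (ps ! m)
       (\<lambda>\<omega>. ((flat ps m (X (t + \<tau>1) \<omega>) * transpose_mat (flat ps m (X (t + \<tau>2) \<omega>))) $$ (i, j))
             \<cdot>\<^sub>m (flat ps m (X (t + \<tau>3) \<omega>) * transpose_mat (flat ps m (X (t + \<tau>4) \<omega>))))"

definition Eij :: "nat \<Rightarrow> nat \<Rightarrow> nat \<Rightarrow> real mat" where
  "Eij n i j = mat n n (\<lambda>(a, b). if a = i \<and> b = j then 1 else 0)"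

definition C_m :: "'a measure \<Rightarrow> nat list \<Rightarrow> nat \<Rightarrow> (int \<Rightarrow> 'a \<Rightarrow> tensor) \<Rightarrow> int \<Rightarrow> int
    \<Rightarrow> nat \<Rightarrow> nat \<Rightarrow> real mat" where
  "C_m M ps m X t \<tau> i j =
     B4_m M ps m X t 0 \<tau> \<tau> 0 i j + B4_m M ps m X t 0 \<tau> 0 \<tau> i j - B4_m M ps m X t \<tau> \<tau> 0 0 i j
     - Sigma_m M ps m X t 0 * (Eij (ps ! m) i j + Eij (ps ! m) j i + 1\<^sub>m (ps ! m))
         * transpose_mat (Sigma_m M ps m X t 0)"

definition pos_def_mat :: "real mat \<Rightarrow> bool" where
  "pos_def_mat S \<longleftrightarrow> (\<exists>n. S \<in> carrier_mat n n \<and> transpose_mat S = S \<and>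
     (\<forall>v \<in> carrier_vec n. v \<noteq> 0\<^sub>v n \<longrightarrow> v \<bullet> (S *\<^sub>v v) > 0))"

definition inv_sqrt_mat :: "real mat \<Rightarrow> real mat" where
  "inv_sqrt_mat A = (THE S. S \<in> carrier_mat (dim_row A) (dim_row A) \<and> pos_def_mat S
      \<and> S * S * A = 1\<^sub>m (dim_row A))"

end

theory Submission
  imports Defs "Jordan_Normal_Form.Determinant"
begin


lemma tidx_Nil[simp]: "tidx [] = {[]}"
  by (auto simp: tidx_def)

lemma tidx_Cons: "tidx (q # qs) = (\<lambda>(x, xs). x # xs) ` ({..<q} \<times> tidx qs)"
proof (rule Set.set_eqI, rule iffI)
  fix l assume "l \<in> tidx (q # qs)"
  then obtain x xs where l: "l = x # xs" "x < q" "xs \<in> tidx qs"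
    unfolding tidx_def by (cases l) (force, fastforce)
  then show "l \<in> (\<lambda>(x, xs). x # xs) ` ({..<q} \<times> tidx qs)" by force
next
  fix l assume "l \<in> (\<lambda>(x, xs). x # xs) ` ({..<q} \<times> tidx qs)"
  then show "l \<in> tidx (q # qs)" unfolding tidx_def
    by (auto simp: nth_Cons split: nat.splits)
qed

lemma mr_decode_bij: "bij_betw (mr_decode qs) {..<prod_list qs} (tidx qs)"
proof (induction qs)
  case Nil
  then show ?case by (simp add: bij_betw_def lessThan_Suc)
next
  case (Cons q qs)
  let ?P = "prod_list qs"
  have inj: "inj_on (mr_decode (q # qs)) {..<prod_list (q # qs)}"
  proof (rule inj_onI)
    fix k k' assume k: "k \<in> {..<prod_list (q # qs)}" and k': "k' \<in> {..<prod_list (q # qs)}"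
      and eq: "mr_decode (q # qs) k = mr_decode (q # qs) k'"
    have qpos: "q > 0" using k by (cases "q = 0") auto
    have "k div q < ?P" using k qpos by (simp add: div_less_iff_less_mult mult.commute)
    moreover have "k' div q < ?P" using k' qpos by (simp add: div_less_iff_less_mult mult.commute)
    moreover have "mr_decode qs (k div q) = mr_decode qs (k' div q)" using eq by simp
    ultimately have "k div q = k' div q" using Cons.IH unfolding bij_betw_def inj_on_def by blast
    moreover have "k mod q = k' mod q" using eq by simp
    ultimately show "k = k'" by (metis div_mult_mod_eq)
  qed
  have img: "mr_decode (q # qs) ` {..<prod_list (q # qs)} = tidx (q # qs)"
  proof (rule Set.set_eqI, rule iffI)
    fix l assume "l \<in> mr_decode (q # qs) ` {..<prod_list (q # qs)}"
    then obtain k where k: "k < q * ?P" "l = mr_decode (q # qs) k" by auto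
    have qpos: "q > 0" using k by (cases "q = 0") auto
    have "k div q < ?P" using k qpos by (simp add: div_less_iff_less_mult mult.commute)
    then have "mr_decode qs (k div q) \<in> tidx qs" using Cons.IH unfolding bij_betw_def by blast
    then show "l \<in> tidx (q # qs)" using k qpos by (auto simp: tidx_Cons)
  next
    fix l assume "l \<in> tidx (q # qs)"
    then obtain x xs where l: "l = x # xs" "x < q" "xs \<in> tidx qs" by (auto simp: tidx_Cons)
    then obtain k' where k': "k' < ?P" "xs = mr_decode qs k'"
      using Cons.IH unfolding bij_betw_def by (metis imageE lessThan_iff)
    define k where "k = x + q * k'"
    have "k mod q = x" "k div q = k'" using l(2) by (auto simp: k_def)
    moreover have "k < q * ?P"
    proof -
      have "k' + 1 \<le> ?P" using k' by simp
      then have "q * (k' + 1) \<le> q * ?P" by (rule mult_le_mono2)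
      then show ?thesis using l(2) unfolding k_def by (simp add: algebra_simps)
    qed
    ultimately show "l \<in> mr_decode (q # qs) ` {..<prod_list (q # qs)}"
      using l k' by (auto intro!: image_eqI[of _ _ k])
  qed
  show ?case unfolding bij_betw_def using inj img by blast
qed

lemma finite_tidx[simp]: "finite (tidx qs)"
  using mr_decode_bij[of qs] by (metis bij_betw_finite finite_lessThan)

lemma tidx_upd: "ix \<in> tidx ps \<Longrightarrow> x < ps ! n \<Longrightarrow> ix[n := x] \<in> tidx ps"
  unfolding tidx_def by (auto simp: nth_list_update) (metis nth_list_update_eq nth_list_update_neq)

lemma tidx_length: "ix \<in> tidx ps \<Longrightarrow> length ix = length ps"
  unfolding tidx_def by auto

lemma sum_split_n:
  assumes n: "n < length ps"
  shows "(\<Sum>ix\<in>tidx ps. f ix) = (\<Sum>ix\<in>{ix\<in>tidx ps. ix ! n = 0}. \<Sum>x<ps ! n. f (ix[n := x]))"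
proof -
  let ?T0 = "{ix\<in>tidx ps. ix ! n = 0}"
  have bij: "bij_betw (\<lambda>(ix, x). ix[n := x]) (?T0 \<times> {..<ps ! n}) (tidx ps)"
  proof (rule bij_betw_byWitness[where f' = "\<lambda>ix. (ix[n := 0], ix ! n)"])
    show "\<forall>a\<in>?T0 \<times> {..<ps ! n}. (\<lambda>ix. (ix[n := 0], ix ! n)) ((\<lambda>(ix, x). ix[n := x]) a) = a"
      using n by (auto simp: tidx_length) (metis list_update_id)
    show "\<forall>a'\<in>tidx ps. (\<lambda>(ix, x). ix[n := x]) ((\<lambda>ix. (ix[n := 0], ix ! n)) a') = a'"
      by auto
    show "(\<lambda>(ix, x). ix[n := x]) ` (?T0 \<times> {..<ps ! n}) \<subseteq> tidx ps"
      by (auto intro: tidx_upd)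
    show "(\<lambda>ix. (ix[n := 0], ix ! n)) ` tidx ps \<subseteq> ?T0 \<times> {..<ps ! n}"
      using n by (auto intro!: tidx_upd simp: tidx_length) (auto simp: tidx_def)
  qed
  have "(\<Sum>ix\<in>tidx ps. f ix) = (\<Sum>(ix, x)\<in>?T0 \<times> {..<ps ! n}. f (ix[n := x]))"
    using sum.reindex_bij_betw[OF bij, of f] by (simp add: case_prod_unfold)
  also have "\<dots> = (\<Sum>ix\<in>?T0. \<Sum>x<ps ! n. f (ix[n := x]))"
    by (simp add: sum.cartesian_product)
  finally show ?thesis .
qed

lemma ins_at_bij:
  assumes m: "m < length ps" and i: "i < ps ! m"
  shows "bij_betw (ins_at m i) (tidx (other_dims ps m)) {ix\<in>tidx ps. ix ! m = i}"
proof (rule bij_betw_byWitness[where f' = "\<lambda>ix. take m ix @ drop (Suc m) ix"])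
  have len: "length (other_dims ps m) = length ps - 1" using m by (simp add: other_dims_def)
  show "\<forall>a\<in>tidx (other_dims ps m). take m (ins_at m i a) @ drop (Suc m) (ins_at m i a) = a"
    using m len by (auto simp: ins_at_def tidx_length)
  show "\<forall>a'\<in>{ix \<in> tidx ps. ix ! m = i}. ins_at m i (take m a' @ drop (Suc m) a') = a'"
    using m by (auto simp: ins_at_def tidx_length min_def Cons_nth_drop_Suc)
  show "ins_at m i ` tidx (other_dims ps m) \<subseteq> {ix \<in> tidx ps. ix ! m = i}"
  proof
    fix ix assume "ix \<in> ins_at m i ` tidx (other_dims ps m)"
    then obtain c where c: "c \<in> tidx (other_dims ps m)" "ix = ins_at m i c" by auto
    have lc: "length c = length ps - 1" using c len by (simp add: tidx_length)
    have cb: "\<And>k. k < length ps - 1 \<Longrightarrow> c ! k < other_dims ps m ! k"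
      using c len unfolding tidx_def by auto
    have od: "\<And>k. k < length ps - 1 \<Longrightarrow> other_dims ps m ! k = (if k < m then ps ! k else ps ! Suc k)"
      using m by (auto simp: other_dims_def nth_append min_def)
    have "ix \<in> tidx ps"
      unfolding tidx_def
    proof (intro CollectI conjI allI impI)
      show "length ix = length ps" using c lc m by (simp add: ins_at_def)
      fix k assume k: "k < length ps"
      consider "k < m" | "k = m" | "k > m" by linarith
      then show "ix ! k < ps ! k"
      proof cases
        case 1 then show ?thesis using c lc m cb[of k] od[of k] by (simp add: ins_at_def nth_append)
      next
        case 2 then show ?thesis using c lc m i by (simp add: ins_at_def nth_append)
      next
        case 3
        then have "ix ! k = c ! (k - 1)" using c lc m by (simp add: ins_at_def nth_append)
        moreover have "c ! (k - 1) < ps ! k"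
        proof -
          have "k - 1 < length ps - 1" "\<not> k - 1 < m" "Suc (k - 1) = k" using 3 k by auto
          then show ?thesis using cb[of "k-1"] od[of "k-1"] by simp
        qed
        ultimately show ?thesis by simp
      qed
    qed
    moreover have "ix ! m = i" using c lc m by (simp add: ins_at_def nth_append)
    ultimately show "ix \<in> {ix \<in> tidx ps. ix ! m = i}" by simp
  qed
  show "(\<lambda>ix. take m ix @ drop (Suc m) ix) ` {ix \<in> tidx ps. ix ! m = i} \<subseteq> tidx (other_dims ps m)"
  proof
    fix c assume "c \<in> (\<lambda>ix. take m ix @ drop (Suc m) ix) ` {ix \<in> tidx ps. ix ! m = i}"
    then obtain ix where ix: "ix \<in> tidx ps" "c = take m ix @ drop (Suc m) ix" by auto
    have li: "length ix = length ps" using ix by (simp add: tidx_length)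
    have ib: "\<And>k. k < length ps \<Longrightarrow> ix ! k < ps ! k" using ix unfolding tidx_def by auto
    show "c \<in> tidx (other_dims ps m)"
      unfolding tidx_def other_dims_def
      using ix li m ib by (auto simp: nth_append min_def)
  qed
qed




definition gram :: "nat list \<Rightarrow> nat \<Rightarrow> tensor \<Rightarrow> tensor \<Rightarrow> real mat" where
  "gram ps m Y Y' = mat (ps ! m) (ps ! m)
     (\<lambda>(i, j). \<Sum>ix\<in>tidx ps. if ix ! m = i then Y ix * Y' (ix[m := j]) else 0)"

lemma gram_carrier[simp]: "gram ps m Y Y' \<in> carrier_mat (ps ! m) (ps ! m)"
  by (simp add: gram_def)

lemma gram_dims[simp]: "dim_row (gram ps m Y Y') = ps ! m" "dim_col (gram ps m Y Y') = ps ! m"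
  by (simp_all add: gram_def)

lemma ins_at_upd: "m \<le> length c \<Longrightarrow> (ins_at m i c)[m := j] = ins_at m j c"
  by (simp add: ins_at_def list_update_append)

lemma flat_dims[simp]: "dim_row (flat ps m A) = ps ! m" "dim_col (flat ps m A) = rho ps m"
  by (simp_all add: flat_def)

lemma flat_carrier[simp]: "flat ps m A \<in> carrier_mat (ps ! m) (rho ps m)"
  by (simp add: flat_def)

lemma flat_gram:
  assumes m: "m < length ps"
  shows "flat ps m A * transpose_mat (flat ps m B) = gram ps m A B"
proof (rule eq_matI)
  fix i j assume i: "i < dim_row (gram ps m A B)" and j: "j < dim_col (gram ps m A B)"
  then have i: "i < ps ! m" and j: "j < ps ! m" by auto
  let ?od = "other_dims ps m"
  have lenod: "\<And>c. c \<in> tidx ?od \<Longrightarrow> m \<le> length c"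
    using m by (auto simp: tidx_length other_dims_def)
  have "(flat ps m A * transpose_mat (flat ps m B)) $$ (i, j)
      = (\<Sum>k<rho ps m. A (ins_at m i (mr_decode ?od k)) * B (ins_at m j (mr_decode ?od k)))"
    using i j by (simp add: flat_def scalar_prod_def atLeast0LessThan)
  also have "\<dots> = (\<Sum>c\<in>tidx ?od. A (ins_at m i c) * B (ins_at m j c))"
    using sum.reindex_bij_betw[OF mr_decode_bij[of ?od], of "\<lambda>c. A (ins_at m i c) * B (ins_at m j c)"]
    by (simp add: rho_def)
  also have "\<dots> = (\<Sum>c\<in>tidx ?od. A (ins_at m i c) * B ((ins_at m i c)[m := j]))"
    by (rule sum.cong) (auto simp: ins_at_upd lenod)
  also have "\<dots> = (\<Sum>ix\<in>{ix\<in>tidx ps. ix ! m = i}. A ix * B (ix[m := j]))"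
    by (rule sum.reindex_bij_betw[OF ins_at_bij[OF m i]])
  also have "\<dots> = gram ps m A B $$ (i, j)"
    using i j by (simp add: gram_def sum.inter_filter)
  finally show "(flat ps m A * transpose_mat (flat ps m B)) $$ (i, j) = gram ps m A B $$ (i, j)" .
qed auto

lemma mult3_index:
  assumes "A \<in> carrier_mat n p" "F \<in> carrier_mat p q" "B \<in> carrier_mat q k" "a < n" "b < k"
  shows "(A * F * B) $$ (a, b) = (\<Sum>x<p. \<Sum>y<q. A $$ (a, x) * F $$ (x, y) * B $$ (y, b))"
proof -
  have "(A * F * B) $$ (a, b) = (\<Sum>x<p. A $$ (a, x) * (\<Sum>y<q. F $$ (x, y) * B $$ (y, b)))"
    using assms by (simp add: scalar_prod_def atLeast0LessThan)
  then show ?thesis by (simp add: sum_distrib_left mult.assoc)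
qed

lemma orth_sum:
  assumes U: "U \<in> carrier_mat p p" "transpose_mat U * U = 1\<^sub>m p" and a: "a < p" and b: "b < p"
  shows "(\<Sum>x<p. U $$ (x, a) * U $$ (x, b)) = (if a = b then 1 else 0)"
proof -
  have "(transpose_mat U * U) $$ (a, b) = (\<Sum>x<p. U $$ (x, a) * U $$ (x, b))"
    using U(1) a b by (simp add: scalar_prod_def atLeast0LessThan)
  moreover have "(transpose_mat U * U) $$ (a, b) = (if a = b then 1 else 0)"
    using U a b by simp
  ultimately show ?thesis by metis
qed

lemma orth_collapse:
  fixes f g :: "nat \<Rightarrow> real"
  assumes U: "U \<in> carrier_mat p p" "transpose_mat U * U = 1\<^sub>m p"
  shows "(\<Sum>x<p. (\<Sum>a<p. f a * U $$ (x, a)) * (\<Sum>b<p. g b * U $$ (x, b))) = (\<Sum>a<p. f a * g a)"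
proof -
  have "(\<Sum>x<p. (\<Sum>a<p. f a * U $$ (x, a)) * (\<Sum>b<p. g b * U $$ (x, b)))
      = (\<Sum>x<p. \<Sum>a<p. \<Sum>b<p. f a * g b * (U $$ (x, a) * U $$ (x, b)))"
    by (simp add: sum_product mult_ac)
  also have "\<dots> = (\<Sum>a<p. \<Sum>x<p. \<Sum>b<p. f a * g b * (U $$ (x, a) * U $$ (x, b)))"
    by (rule sum.swap)
  also have "\<dots> = (\<Sum>a<p. \<Sum>b<p. \<Sum>x<p. f a * g b * (U $$ (x, a) * U $$ (x, b)))"
    by (rule sum.cong[OF refl], rule sum.swap)
  also have "\<dots> = (\<Sum>a<p. \<Sum>b<p. f a * g b * (if a = b then 1 else 0))"
    using orth_sum[OF U] by (simp add: sum_distrib_left[symmetric])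
  also have "\<dots> = (\<Sum>a<p. f a * g a)"
    by (simp add: if_distrib cong: if_cong)
  finally show ?thesis .
qed

lemma gram_T0:
  assumes m: "m < length ps" and a: "a < ps ! m" and b: "b < ps ! m"
  shows "gram ps m Y Y' $$ (a, b) = (\<Sum>ix\<in>{ix\<in>tidx ps. ix ! m = 0}. Y (ix[m := a]) * Y' (ix[m := b]))"
proof -
  have "gram ps m Y Y' $$ (a, b) = (\<Sum>ix\<in>tidx ps. if ix ! m = a then Y ix * Y' (ix[m := b]) else 0)"
    using a b by (simp add: gram_def)
  also have "\<dots> = (\<Sum>ix\<in>{ix\<in>tidx ps. ix ! m = 0}. \<Sum>x<ps ! m.
        if ix[m := x] ! m = a then Y (ix[m := x]) * Y' (ix[m := x, m := b]) else 0)"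
    by (rule sum_split_n[OF m])
  also have "\<dots> = (\<Sum>ix\<in>{ix\<in>tidx ps. ix ! m = 0}. Y (ix[m := a]) * Y' (ix[m := b]))"
    using m a by (intro sum.cong refl) (auto simp: tidx_length)
  finally show ?thesis .
qed

lemma mode_prod_same:
  assumes m: "m < length ps" and A: "A \<in> carrier_mat (ps ! m) (ps ! m)"
  shows "gram ps m (mode_prod ps m Y A) (mode_prod ps m Y' A) = A * gram ps m Y Y' * transpose_mat A"
proof (rule eq_matI)
  fix i j assume "i < dim_row (A * gram ps m Y Y' * transpose_mat A)"
    "j < dim_col (A * gram ps m Y Y' * transpose_mat A)"
  then have i: "i < ps ! m" and j: "j < ps ! m" using A by auto
  let ?T0 = "{ix\<in>tidx ps. ix ! m = 0}"
  let ?p = "ps ! m"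
  have len: "\<And>ix. ix \<in> ?T0 \<Longrightarrow> m < length ix" using m by (auto simp: tidx_length)
  have "gram ps m (mode_prod ps m Y A) (mode_prod ps m Y' A) $$ (i, j)
     = (\<Sum>ix\<in>?T0. mode_prod ps m Y A (ix[m := i]) * mode_prod ps m Y' A (ix[m := j]))"
    by (rule gram_T0[OF m i j])
  also have "\<dots> = (\<Sum>ix\<in>?T0. (\<Sum>a<?p. Y (ix[m := a]) * A $$ (i, a)) * (\<Sum>b<?p. Y' (ix[m := b]) * A $$ (j, b)))"
    using len by (intro sum.cong refl) (simp add: mode_prod_def)
  also have "\<dots> = (\<Sum>ix\<in>?T0. \<Sum>a<?p. \<Sum>b<?p. A $$ (i, a) * (Y (ix[m := a]) * Y' (ix[m := b])) * A $$ (j, b))"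
    by (simp add: sum_product mult_ac)
  also have "\<dots> = (\<Sum>a<?p. \<Sum>ix\<in>?T0. \<Sum>b<?p. A $$ (i, a) * (Y (ix[m := a]) * Y' (ix[m := b])) * A $$ (j, b))"
    by (rule sum.swap)
  also have "\<dots> = (\<Sum>a<?p. \<Sum>b<?p. \<Sum>ix\<in>?T0. A $$ (i, a) * (Y (ix[m := a]) * Y' (ix[m := b])) * A $$ (j, b))"
    by (rule sum.cong[OF refl], rule sum.swap)
  also have "\<dots> = (\<Sum>a<?p. \<Sum>b<?p. A $$ (i, a) * gram ps m Y Y' $$ (a, b) * transpose_mat A $$ (b, j))"
    using A j by (intro sum.cong refl) (simp add: gram_T0[OF m] sum_distrib_left sum_distrib_right)
  also have "\<dots> = (A * gram ps m Y Y' * transpose_mat A) $$ (i, j)"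
    using A i j by (intro mult3_index[symmetric]) auto
  finally show "gram ps m (mode_prod ps m Y A) (mode_prod ps m Y' A) $$ (i, j)
     = (A * gram ps m Y Y' * transpose_mat A) $$ (i, j)" .
qed (use A in auto)

lemma mode_prod_other:
  assumes m: "m < length ps" and n: "n < length ps" and nm: "n \<noteq> m"
    and A: "A \<in> carrier_mat (ps ! n) (ps ! n)" "transpose_mat A * A = 1\<^sub>m (ps ! n)"
  shows "gram ps m (mode_prod ps n Y A) (mode_prod ps n Y' A) = gram ps m Y Y'"
proof (rule eq_matI)
  fix i j assume "i < dim_row (gram ps m Y Y')" "j < dim_col (gram ps m Y Y')"
  then have i: "i < ps ! m" and j: "j < ps ! m" by auto
  let ?T0 = "{ix\<in>tidx ps. ix ! n = 0}"
  let ?p = "ps ! n"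
  have len: "\<And>ix. ix \<in> ?T0 \<Longrightarrow> n < length ix \<and> m < length ix" using m n by (auto simp: tidx_length)
  have "gram ps m (mode_prod ps n Y A) (mode_prod ps n Y' A) $$ (i, j)
    = (\<Sum>ix\<in>tidx ps. if ix ! m = i then mode_prod ps n Y A ix * mode_prod ps n Y' A (ix[m := j]) else 0)"
    using i j by (simp add: gram_def)
  also have "\<dots> = (\<Sum>ix\<in>?T0. \<Sum>x<?p. if ix[n := x] ! m = i then mode_prod ps n Y A (ix[n := x])
                   * mode_prod ps n Y' A (ix[n := x, m := j]) else 0)"
    by (rule sum_split_n[OF n])
  also have "\<dots> = (\<Sum>ix\<in>?T0. \<Sum>x<?p. if ix ! m = i then (\<Sum>a<?p. Y (ix[n := a]) * A $$ (x, a))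
                   * (\<Sum>b<?p. Y' (ix[m := j, n := b]) * A $$ (x, b)) else 0)"
    using len nm by (intro sum.cong refl) (simp add: mode_prod_def list_update_swap[of n m])
  also have "\<dots> = (\<Sum>ix\<in>?T0. if ix ! m = i then (\<Sum>a<?p. Y (ix[n := a]) * Y' (ix[m := j, n := a])) else 0)"
    by (intro sum.cong refl) (simp add: orth_collapse[OF A] sum.If_cases)
  also have "\<dots> = (\<Sum>ix\<in>?T0. \<Sum>x<?p. if ix[n := x] ! m = i then Y (ix[n := x]) * Y' (ix[n := x, m := j]) else 0)"
    using len nm by (intro sum.cong refl) (simp add: list_update_swap[of n m])
  also have "\<dots> = (\<Sum>ix\<in>tidx ps. if ix ! m = i then Y ix * Y' (ix[m := j]) else 0)"
    by (rule sum_split_n[OF n, symmetric])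
  also have "\<dots> = gram ps m Y Y' $$ (i, j)"
    using i j by (simp add: gram_def)
  finally show "gram ps m (mode_prod ps n Y A) (mode_prod ps n Y' A) $$ (i, j) = gram ps m Y Y' $$ (i, j)" .
qed auto


lemma gram_foldl:
  assumes m: "m < length ps"
    and U: "\<forall>n<length ps. U n \<in> carrier_mat (ps ! n) (ps ! n) \<and> transpose_mat (U n) * U n = 1\<^sub>m (ps ! n)"
  shows "distinct xs \<Longrightarrow> set xs \<subseteq> {..<length ps} \<Longrightarrow>
    gram ps m (foldl (\<lambda>Y n. mode_prod ps n Y (U n)) Y xs) (foldl (\<lambda>Y n. mode_prod ps n Y (U n)) Y' xs)
    = (if m \<in> set xs then U m * gram ps m Y Y' * transpose_mat (U m) else gram ps m Y Y')"
proof (induction xs rule: rev_induct)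
  case Nil
  then show ?case by simp
next
  case (snoc x xs)
  let ?F = "foldl (\<lambda>Y n. mode_prod ps n Y (U n)) Y xs"
  let ?F' = "foldl (\<lambda>Y n. mode_prod ps n Y (U n)) Y' xs"
  have IH: "gram ps m ?F ?F' = (if m \<in> set xs then U m * gram ps m Y Y' * transpose_mat (U m) else gram ps m Y Y')"
    using snoc by simp
  have x: "x < length ps" using snoc.prems by simp
  show ?case
  proof (cases "x = m")
    case True
    then have "m \<notin> set xs" using snoc.prems by simp
    then show ?thesis using True IH mode_prod_same[OF m, of "U m" ?F ?F'] U m by simp
  next
    case False
    then show ?thesis using IH mode_prod_other[OF m x False, of "U x" ?F ?F'] U x by simp
  qed
qed

lemma gram_mode_prods:
  assumes m: "m < length ps"
    and U: "\<forall>n<length ps. U n \<in> carrier_mat (ps ! n) (ps ! n) \<and> transpose_mat (U n) * U n = 1\<^sub>m (ps ! n)"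
  shows "gram ps m (mode_prods ps U Y) (mode_prods ps U Y') = U m * gram ps m Y Y' * transpose_mat (U m)"
  unfolding mode_prods_def using gram_foldl[OF m U, of "[0..<length ps]"] m by (simp add: atLeast0LessThan)

lemma gram_cong:
  assumes "\<And>ix. ix \<in> tidx ps \<Longrightarrow> Y ix = Z ix" "\<And>ix. ix \<in> tidx ps \<Longrightarrow> Y' ix = Z' ix"
  shows "gram ps m Y Y' = gram ps m Z Z'"
  unfolding gram_def
  by (rule eq_matI) (auto intro!: sum.cong simp: assms tidx_upd)

lemma gram_smult: "gram ps m (\<lambda>ix. a * Y ix) (\<lambda>ix. b * Y' ix) = (a * b) \<cdot>\<^sub>m gram ps m Y Y'"
  unfolding gram_def
  by (rule eq_matI) (auto simp: sum_distrib_left intro!: sum.cong)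




lemma abs_prod2: "\<bar>(x::real) * y\<bar> \<le> (x^2 + y^2) / 2"
proof -
  have "0 \<le> (\<bar>x\<bar> - \<bar>y\<bar>)^2" by simp
  then show ?thesis by (simp add: power2_eq_square algebra_simps abs_mult)
qed

lemma aux4:
  fixes v1 v2 v3 v4 v5 v6 v7 :: real
  assumes "v1 \<le> (v2 + v3) / 2" "v2 \<le> (v4 + v5) / 2" "v3 \<le> (v6 + v7) / 2"
  shows "v1 \<le> (v4 + v5 + v6 + v7) / 4"
  using assms by argo

lemma abs_prod4: "\<bar>(x::real) * y * z * w\<bar> \<le> (x^4 + y^4 + z^4 + w^4) / 4"
proof -
  have 1: "\<bar>(x * y) * (z * w)\<bar> \<le> ((x*y)^2 + (z*w)^2) / 2" by (rule abs_prod2)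
  have 2: "\<bar>x^2 * y^2\<bar> \<le> (x^4 + y^4) / 2"
    using abs_prod2[of "x^2" "y^2"] unfolding power_mult[symmetric] by simp
  have 3: "\<bar>z^2 * w^2\<bar> \<le> (z^4 + w^4) / 2"
    using abs_prod2[of "z^2" "w^2"] unfolding power_mult[symmetric] by simp
  have e: "(x*y)^2 = \<bar>x^2 * y^2\<bar>" "(z*w)^2 = \<bar>z^2 * w^2\<bar>" "\<bar>x * y * z * w\<bar> = \<bar>(x * y) * (z * w)\<bar>"
    by (simp_all add: power_mult_distrib mult_ac)
  have h1: "\<bar>x * y * z * w\<bar> \<le> (\<bar>x^2 * y^2\<bar> + \<bar>z^2 * w^2\<bar>) / 2"
    unfolding e(3) e(1)[symmetric] e(2)[symmetric] by (rule 1)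
  show ?thesis by (rule aux4[OF h1 2 3])
qed

lemma int4:
  fixes f g h k :: "'a \<Rightarrow> real"
  assumes "f \<in> borel_measurable M" "g \<in> borel_measurable M" "h \<in> borel_measurable M" "k \<in> borel_measurable M"
    and "integrable M (\<lambda>x. f x ^ 4)" "integrable M (\<lambda>x. g x ^ 4)"
        "integrable M (\<lambda>x. h x ^ 4)" "integrable M (\<lambda>x. k x ^ 4)"
  shows "integrable M (\<lambda>x. f x * g x * h x * k x)"
proof (rule Bochner_Integration.integrable_bound[where f="\<lambda>x. (f x ^ 4 + g x ^ 4 + h x ^ 4 + k x ^ 4) / 4"])
  show "integrable M (\<lambda>x. (f x ^ 4 + g x ^ 4 + h x ^ 4 + k x ^ 4) / 4)"
    using assms by auto
  show "(\<lambda>x. f x * g x * h x * k x) \<in> borel_measurable M" using assms by auto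
  show "AE x in M. norm (f x * g x * h x * k x) \<le> norm ((f x ^ 4 + g x ^ 4 + h x ^ 4 + k x ^ 4) / 4)"
  proof (rule AE_I2)
    fix x
    have "0 \<le> (f x ^ 4 + g x ^ 4 + h x ^ 4 + k x ^ 4) / 4" by simp
    then show "norm (f x * g x * h x * k x) \<le> norm ((f x ^ 4 + g x ^ 4 + h x ^ 4 + k x ^ 4) / 4)"
      using abs_prod4[of "f x" "g x" "h x" "k x"] by simp
  qed
qed

definition mexp_ok :: "'a measure \<Rightarrow> nat \<Rightarrow> ('a \<Rightarrow> real mat) \<Rightarrow> bool" where
  "mexp_ok M p F \<longleftrightarrow> (\<forall>\<omega>. F \<omega> \<in> carrier_mat p p) \<and> (\<forall>x<p. \<forall>y<p. integrable M (\<lambda>\<omega>. F \<omega> $$ (x, y)))"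

lemma mat_expect_carrier[simp]: "mat_expect M n k F \<in> carrier_mat n k"
  by (simp add: mat_expect_def)

lemma mat_expect_cong:
  "(\<And>\<omega>. \<omega> \<in> space M \<Longrightarrow> F \<omega> = G \<omega>) \<Longrightarrow> mat_expect M n k F = mat_expect M n k G"
  unfolding mat_expect_def by (rule eq_matI) (auto intro!: Bochner_Integration.integral_cong)

lemma mat_expect_index: "a < n \<Longrightarrow> b < k \<Longrightarrow> mat_expect M n k F $$ (a, b) = integral\<^sup>L M (\<lambda>\<omega>. F \<omega> $$ (a, b))"
  by (simp add: mat_expect_def)

lemma mat_expect_conj:
  assumes ok: "mexp_ok M p F" and U: "U \<in> carrier_mat p p"
  shows "mat_expect M p p (\<lambda>\<omega>. k \<cdot>\<^sub>m (U * F \<omega> * transpose_mat U)) = k \<cdot>\<^sub>m (U * mat_expect M p p F * transpose_mat U)"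
proof (rule eq_matI)
  fix a b assume "a < dim_row (k \<cdot>\<^sub>m (U * mat_expect M p p F * transpose_mat U))"
    "b < dim_col (k \<cdot>\<^sub>m (U * mat_expect M p p F * transpose_mat U))"
  then have a: "a < p" and b: "b < p" using U by auto
  have Fc: "\<And>\<omega>. F \<omega> \<in> carrier_mat p p" and Fi: "\<And>x y. x < p \<Longrightarrow> y < p \<Longrightarrow> integrable M (\<lambda>\<omega>. F \<omega> $$ (x, y))"
    using ok unfolding mexp_ok_def by auto
  have pw: "\<And>\<omega>. (U * F \<omega> * transpose_mat U) $$ (a, b) = (\<Sum>x<p. \<Sum>y<p. U $$ (a, x) * F \<omega> $$ (x, y) * transpose_mat U $$ (y, b))"
    using a b U Fc by (intro mult3_index) auto
  have pw2: "\<And>\<omega>. (k \<cdot>\<^sub>m (U * F \<omega> * transpose_mat U)) $$ (a, b) = k * (\<Sum>x<p. \<Sum>y<p. U $$ (a, x) * F \<omega> $$ (x, y) * transpose_mat U $$ (y, b))"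
  proof -
    fix \<omega>
    have "(k \<cdot>\<^sub>m (U * F \<omega> * transpose_mat U)) $$ (a, b) = k * (U * F \<omega> * transpose_mat U) $$ (a, b)"
      using a b U Fc[of \<omega>] by (intro index_smult_mat(1)) auto
    then show "?thesis \<omega>" using pw[of \<omega>] by simp
  qed
  have "mat_expect M p p (\<lambda>\<omega>. k \<cdot>\<^sub>m (U * F \<omega> * transpose_mat U)) $$ (a, b)
      = (\<integral>\<omega>. k * (\<Sum>x<p. \<Sum>y<p. U $$ (a, x) * F \<omega> $$ (x, y) * transpose_mat U $$ (y, b)) \<partial>M)"
    using a b by (simp only: mat_expect_index pw2)
  also have "\<dots> = k * (\<Sum>x<p. \<Sum>y<p. U $$ (a, x) * integral\<^sup>L M (\<lambda>\<omega>. F \<omega> $$ (x, y)) * transpose_mat U $$ (y, b))"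
  proof -
    have I: "\<And>x y. x \<in> {..<p} \<Longrightarrow> y \<in> {..<p} \<Longrightarrow> integrable M (\<lambda>\<omega>. U $$ (a, x) * F \<omega> $$ (x, y) * transpose_mat U $$ (y, b))"
    proof -
      fix x y assume "x \<in> {..<p}" "y \<in> {..<p}"
      then have "integrable M (\<lambda>\<omega>. F \<omega> $$ (x, y))" by (intro Fi) auto
      then show "integrable M (\<lambda>\<omega>. U $$ (a, x) * F \<omega> $$ (x, y) * transpose_mat U $$ (y, b))" by simp
    qed
    have "(\<integral>\<omega>. (\<Sum>x<p. \<Sum>y<p. U $$ (a, x) * F \<omega> $$ (x, y) * transpose_mat U $$ (y, b)) \<partial>M)
        = (\<Sum>x<p. \<integral>\<omega>. (\<Sum>y<p. U $$ (a, x) * F \<omega> $$ (x, y) * transpose_mat U $$ (y, b)) \<partial>M)"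
      by (rule Bochner_Integration.integral_sum[where f="\<lambda>x \<omega>. \<Sum>y<p. U $$ (a, x) * F \<omega> $$ (x, y) * transpose_mat U $$ (y, b)"])
        (rule Bochner_Integration.integrable_sum, rule I)
    also have "\<dots> = (\<Sum>x<p. \<Sum>y<p. \<integral>\<omega>. U $$ (a, x) * F \<omega> $$ (x, y) * transpose_mat U $$ (y, b) \<partial>M)"
      by (intro sum.cong refl Bochner_Integration.integral_sum I) auto
    also have "\<dots> = (\<Sum>x<p. \<Sum>y<p. U $$ (a, x) * integral\<^sup>L M (\<lambda>\<omega>. F \<omega> $$ (x, y)) * transpose_mat U $$ (y, b))"
      by simp
    finally show ?thesis by simp
  qed
  also have "\<dots> = (k \<cdot>\<^sub>m (U * mat_expect M p p F * transpose_mat U)) $$ (a, b)"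
  proof -
    have q: "(U * mat_expect M p p F * transpose_mat U) $$ (a, b) = (\<Sum>x<p. \<Sum>y<p. U $$ (a, x) * mat_expect M p p F $$ (x, y) * transpose_mat U $$ (y, b))"
      using a b U by (intro mult3_index) auto
    have q2: "\<dots> = (\<Sum>x<p. \<Sum>y<p. U $$ (a, x) * integral\<^sup>L M (\<lambda>\<omega>. F \<omega> $$ (x, y)) * transpose_mat U $$ (y, b))"
      by (intro sum.cong refl) (simp add: mat_expect_index)
    have q3: "(k \<cdot>\<^sub>m (U * mat_expect M p p F * transpose_mat U)) $$ (a, b) = k * (U * mat_expect M p p F * transpose_mat U) $$ (a, b)"
      using a b U by (intro index_smult_mat(1)) auto
    show ?thesis unfolding q3 q q2 ..
  qed
  finally show "mat_expect M p p (\<lambda>\<omega>. k \<cdot>\<^sub>m (U * F \<omega> * transpose_mat U)) $$ (a, b)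
     = (k \<cdot>\<^sub>m (U * mat_expect M p p F * transpose_mat U)) $$ (a, b)" .
qed (use U in \<open>auto simp: mat_expect_def\<close>)

lemma smult_smult': "a \<cdot>\<^sub>m (b \<cdot>\<^sub>m (A :: real mat)) = (a * b) \<cdot>\<^sub>m A"
  by (rule eq_matI) auto

lemma conj_back:
  assumes U: "U \<in> carrier_mat p p" "transpose_mat U * U = 1\<^sub>m p" and E: "E \<in> carrier_mat p p"
  shows "transpose_mat U * (U * E * transpose_mat U) * U = (E :: real mat)"
proof -
  have Ut: "transpose_mat U \<in> carrier_mat p p" using U by simp
  have UE: "U * E \<in> carrier_mat p p" using U E by simp
  have UEU: "U * E * transpose_mat U \<in> carrier_mat p p" using U E by simp
  have "transpose_mat U * (U * E * transpose_mat U) * U = transpose_mat U * ((U * E * transpose_mat U) * U)"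
    by (rule assoc_mult_mat[OF Ut UEU U(1)])
  also have "(U * E * transpose_mat U) * U = (U * E) * (transpose_mat U * U)"
    by (rule assoc_mult_mat[OF UE Ut U(1)])
  also have "\<dots> = U * E" using U UE E by simp
  also have "transpose_mat U * (U * E) = (transpose_mat U * U) * E"
    by (rule assoc_mult_mat[OF Ut U(1) E, symmetric])
  also have "\<dots> = E" using U E by simp
  finally show ?thesis .
qed

lemma smult_conj:
  assumes U: "U \<in> carrier_mat p p" and A: "A \<in> carrier_mat p p"
  shows "transpose_mat U * (k \<cdot>\<^sub>m A) * U = k \<cdot>\<^sub>m (transpose_mat U * A * (U :: real mat))"
proof -
  have Ut: "transpose_mat U \<in> carrier_mat p p" using U by simp
  have "transpose_mat U * (k \<cdot>\<^sub>m A) = k \<cdot>\<^sub>m (transpose_mat U * A)"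
    by (rule mult_smult_distrib[OF Ut A])
  moreover have "(k \<cdot>\<^sub>m (transpose_mat U * A)) * U = k \<cdot>\<^sub>m (transpose_mat U * A * U)"
    by (rule mult_smult_assoc_mat[of "transpose_mat U * A" p p U p]) (use Ut A U in auto)
  ultimately show ?thesis by simp
qed

lemma conj_smult:
  assumes U: "U \<in> carrier_mat p p" and A: "A \<in> carrier_mat p p"
  shows "U * (k \<cdot>\<^sub>m A) * transpose_mat U = k \<cdot>\<^sub>m (U * A * transpose_mat (U :: real mat))"
proof -
  have Ut: "transpose_mat U \<in> carrier_mat p p" using U by simp
  have "U * (k \<cdot>\<^sub>m A) = k \<cdot>\<^sub>m (U * A)"
    by (rule mult_smult_distrib[OF U A])
  moreover have "(k \<cdot>\<^sub>m (U * A)) * transpose_mat U = k \<cdot>\<^sub>m (U * A * transpose_mat U)"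
    by (rule mult_smult_assoc_mat[of "U * A" p p "transpose_mat U" p]) (use Ut A U in auto)
  ultimately show ?thesis by simp
qed

lemma key1:
  assumes ok: "mexp_ok M p F" and U: "U \<in> carrier_mat p p"
    and G: "\<And>\<omega>. \<omega> \<in> space M \<Longrightarrow> G \<omega> = k \<cdot>\<^sub>m (U * F \<omega> * transpose_mat U)"
  shows "r \<cdot>\<^sub>m mat_expect M p p G = k \<cdot>\<^sub>m (U * (r \<cdot>\<^sub>m mat_expect M p p F) * transpose_mat U)"
proof -
  have "mat_expect M p p G = mat_expect M p p (\<lambda>\<omega>. k \<cdot>\<^sub>m (U * F \<omega> * transpose_mat U))"
    by (rule mat_expect_cong) (rule G)
  also have "\<dots> = k \<cdot>\<^sub>m (U * mat_expect M p p F * transpose_mat U)"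
    by (rule mat_expect_conj[OF ok U])
  finally have 1: "mat_expect M p p G = k \<cdot>\<^sub>m (U * mat_expect M p p F * transpose_mat U)" .
  have 2: "U * (r \<cdot>\<^sub>m mat_expect M p p F) * transpose_mat U = r \<cdot>\<^sub>m (U * mat_expect M p p F * transpose_mat U)"
    by (rule conj_smult[OF U mat_expect_carrier])
  show ?thesis unfolding 1 2 smult_smult' by (simp add: mult.commute)
qed

lemma key2:
  assumes ok: "mexp_ok M p F" and U: "U \<in> carrier_mat p p" "transpose_mat U * U = 1\<^sub>m p"
    and G: "\<And>\<omega>. \<omega> \<in> space M \<Longrightarrow> G \<omega> = k \<cdot>\<^sub>m (U * F \<omega> * transpose_mat U)"
  shows "transpose_mat U * (r \<cdot>\<^sub>m mat_expect M p p G) * U = k \<cdot>\<^sub>m (r \<cdot>\<^sub>m mat_expect M p p F)"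
proof -
  have E: "r \<cdot>\<^sub>m mat_expect M p p F \<in> carrier_mat p p" by simp
  have C: "U * (r \<cdot>\<^sub>m mat_expect M p p F) * transpose_mat U \<in> carrier_mat p p"
    using U(1) E by (auto intro!: mult_carrier_mat[of _ p p])
  have "transpose_mat U * (r \<cdot>\<^sub>m mat_expect M p p G) * U
      = transpose_mat U * (k \<cdot>\<^sub>m (U * (r \<cdot>\<^sub>m mat_expect M p p F) * transpose_mat U)) * U"
    using key1[OF ok U(1) G] by simp
  also have "\<dots> = k \<cdot>\<^sub>m (transpose_mat U * (U * (r \<cdot>\<^sub>m mat_expect M p p F) * transpose_mat U) * U)"
    by (rule smult_conj[OF U(1) C])
  also have "\<dots> = k \<cdot>\<^sub>m (r \<cdot>\<^sub>m mat_expect M p p F)"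
    using conj_back[OF U E] by simp
  finally show ?thesis .
qed

lemma diagonal_smult: "diagonal_mat (A :: real mat) \<Longrightarrow> diagonal_mat (k \<cdot>\<^sub>m A)"
  by (simp add: diagonal_mat_def)




lemma mult_index2:
  assumes "A \<in> carrier_mat n p" "B \<in> carrier_mat p k" "a < n" "b < k"
  shows "(A * B) $$ (a, b) = (\<Sum>y<p. A $$ (a, y) * B $$ (y, b))"
  using assms by (simp add: scalar_prod_def atLeast0LessThan)

locale zsetup =
  fixes M :: "'a measure" and ps :: "nat list" and Z :: "int \<Rightarrow> 'a \<Rightarrow> tensor"
  assumes P: "prob_space M"
    and Zm: "\<forall>t. \<forall>ix \<in> tidx ps. (\<lambda>\<omega>. Z t \<omega> ix) \<in> borel_measurable M"
    and Z4: "\<forall>t. \<forall>ix \<in> tidx ps. integrable M (\<lambda>\<omega>. (Z t \<omega> ix) ^ 4)"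
begin

lemma intZ4:
  assumes "i1 \<in> tidx ps" "i2 \<in> tidx ps" "i3 \<in> tidx ps" "i4 \<in> tidx ps"
  shows "integrable M (\<lambda>\<omega>. Z t1 \<omega> i1 * Z t2 \<omega> i2 * Z t3 \<omega> i3 * Z t4 \<omega> i4)"
  using assms Zm Z4 by (intro int4) auto

lemma intZ2:
  assumes "i1 \<in> tidx ps" "i2 \<in> tidx ps"
  shows "integrable M (\<lambda>\<omega>. Z t1 \<omega> i1 * Z t2 \<omega> i2)"
proof -
  have "integrable M (\<lambda>\<omega>. Z t1 \<omega> i1 * Z t2 \<omega> i2 * (\<lambda>_. 1::real) \<omega> * (\<lambda>_. 1::real) \<omega>)"
    using assms Zm Z4
    by (intro int4) (auto intro: finite_measure.integrable_const prob_space.finite_measure[OF P])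
  then show ?thesis by simp
qed

lemma int_gram:
  assumes m: "m < length ps" and a: "a < ps ! m" and b: "b < ps ! m"
  shows "integrable M (\<lambda>\<omega>. gram ps m (Z t \<omega>) (Z s \<omega>) $$ (a, b))"
proof -
  have "integrable M (\<lambda>\<omega>. \<Sum>ix\<in>tidx ps. if ix ! m = a then Z t \<omega> ix * Z s \<omega> (ix[m := b]) else 0)"
  proof (rule Bochner_Integration.integrable_sum)
    fix ix assume ix: "ix \<in> tidx ps"
    show "integrable M (\<lambda>\<omega>. if ix ! m = a then Z t \<omega> ix * Z s \<omega> (ix[m := b]) else 0)"
      using intZ2[OF ix tidx_upd[OF ix b]] by (cases "ix ! m = a") auto
  qed
  then show ?thesis using a b by (simp add: gram_def)
qed

lemma int_gram2:
  assumes m: "m < length ps" and a: "a < ps ! m" and b: "b < ps ! m" and c: "c < ps ! m" and d: "d < ps ! m"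
  shows "integrable M (\<lambda>\<omega>. gram ps m (Z t1 \<omega>) (Z s1 \<omega>) $$ (a, b) * gram ps m (Z t2 \<omega>) (Z s2 \<omega>) $$ (c, d))"
proof -
  have "integrable M (\<lambda>\<omega>. \<Sum>ix\<in>tidx ps. \<Sum>jx\<in>tidx ps.
     (if ix ! m = a then Z t1 \<omega> ix * Z s1 \<omega> (ix[m := b]) else 0) *
     (if jx ! m = c then Z t2 \<omega> jx * Z s2 \<omega> (jx[m := d]) else 0))"
  proof (rule Bochner_Integration.integrable_sum, rule Bochner_Integration.integrable_sum)
    fix ix jx assume ix: "ix \<in> tidx ps" and jx: "jx \<in> tidx ps"
    have "integrable M (\<lambda>\<omega>. Z t1 \<omega> ix * Z s1 \<omega> (ix[m := b]) * Z t2 \<omega> jx * Z s2 \<omega> (jx[m := d]))"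
      by (rule intZ4[OF ix tidx_upd[OF ix b] jx tidx_upd[OF jx d]])
    then show "integrable M (\<lambda>\<omega>. (if ix ! m = a then Z t1 \<omega> ix * Z s1 \<omega> (ix[m := b]) else 0) *
     (if jx ! m = c then Z t2 \<omega> jx * Z s2 \<omega> (jx[m := d]) else 0))"
      by (cases "ix ! m = a"; cases "jx ! m = c") (auto simp: mult_ac)
  qed
  then show ?thesis using a b c d by (simp add: gram_def sum_product)
qed

end

lemma Sigma_gram:
  assumes m: "m < length ps"
  shows "Sigma_m M ps m W t \<tau> = (1 / real (rho ps m)) \<cdot>\<^sub>m mat_expect M (ps ! m) (ps ! m) (\<lambda>\<omega>. gram ps m (W t \<omega>) (W (t + \<tau>) \<omega>))"
  unfolding Sigma_m_def flat_gram[OF m] ..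

lemma B_gram:
  assumes m: "m < length ps"
  shows "B_m M ps m W t \<tau> = (1 / real (rho ps m)) \<cdot>\<^sub>m mat_expect M (ps ! m) (ps ! m)
     (\<lambda>\<omega>. gram ps m (W t \<omega>) (W (t + \<tau>) \<omega>) * gram ps m (W (t + \<tau>) \<omega>) (W t \<omega>))"
proof -
  have eq: "\<And>A B. flat ps m A * transpose_mat (flat ps m B) * flat ps m B * transpose_mat (flat ps m A)
     = gram ps m A B * gram ps m B A"
  proof -
    fix A B
    have c1: "flat ps m A * transpose_mat (flat ps m B) \<in> carrier_mat (ps ! m) (ps ! m)"
      by (rule mult_carrier_mat[where nr="ps ! m" and n="rho ps m"]) simp_all
    have "flat ps m A * transpose_mat (flat ps m B) * flat ps m B * transpose_mat (flat ps m A)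
     = (flat ps m A * transpose_mat (flat ps m B)) * (flat ps m B * transpose_mat (flat ps m A))"
      by (rule assoc_mult_mat[OF c1 flat_carrier], subst transpose_carrier_mat, rule flat_carrier)
    then show "flat ps m A * transpose_mat (flat ps m B) * flat ps m B * transpose_mat (flat ps m A)
     = gram ps m A B * gram ps m B A" unfolding flat_gram[OF m] .
  qed
  show ?thesis unfolding B_m_def eq ..
qed

lemma B4_gram:
  assumes m: "m < length ps"
  shows "B4_m M ps m W t \<alpha> \<beta> \<gamma> \<delta> i j = (1 / real (rho ps m)) \<cdot>\<^sub>m mat_expect M (ps ! m) (ps ! m)
     (\<lambda>\<omega>. gram ps m (W (t + \<alpha>) \<omega>) (W (t + \<beta>) \<omega>) $$ (i, j) \<cdot>\<^sub>m gram ps m (W (t + \<gamma>) \<omega>) (W (t + \<delta>) \<omega>))"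
  unfolding B4_m_def flat_gram[OF m] ..

lemma mid_cancel:
  assumes U: "U \<in> carrier_mat p p" "transpose_mat U * U = 1\<^sub>m p" and X: "X \<in> carrier_mat n p" and Y: "Y \<in> carrier_mat p k"
  shows "(X * transpose_mat U) * (U * Y) = X * (Y :: real mat)"
proof -
  have Ut: "transpose_mat U \<in> carrier_mat p p" using U by simp
  have UY: "U * Y \<in> carrier_mat p k" using U(1) Y by (rule mult_carrier_mat)
  have "(X * transpose_mat U) * (U * Y) = X * (transpose_mat U * (U * Y))"
    by (rule assoc_mult_mat[OF X Ut UY])
  also have "transpose_mat U * (U * Y) = (transpose_mat U * U) * Y"
    by (rule assoc_mult_mat[OF Ut U(1) Y, symmetric])
  also have "\<dots> = Y" unfolding U(2) by (rule left_mult_one_mat[OF Y])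
  finally show ?thesis .
qed

lemma prod_conj:
  assumes U: "U \<in> carrier_mat p p" "transpose_mat U * U = 1\<^sub>m p" and A: "A \<in> carrier_mat p p" and B: "B \<in> carrier_mat p p"
  shows "(a \<cdot>\<^sub>m (U * A * transpose_mat U)) * (b \<cdot>\<^sub>m (U * B * transpose_mat U)) = (a * b) \<cdot>\<^sub>m (U * (A * B) * transpose_mat (U :: real mat))"
proof -
  have Ut: "transpose_mat U \<in> carrier_mat p p" using U by simp
  have UA: "U * A \<in> carrier_mat p p" using U(1) A by (rule mult_carrier_mat)
  have UB: "U * B \<in> carrier_mat p p" using U(1) B by (rule mult_carrier_mat)
  have BU: "B * transpose_mat U \<in> carrier_mat p p" using B Ut by (rule mult_carrier_mat)
  have X: "U * A * transpose_mat U \<in> carrier_mat p p" using UA Ut by (rule mult_carrier_mat)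
  have Y: "U * B * transpose_mat U \<in> carrier_mat p p" using UB Ut by (rule mult_carrier_mat)
  have 1: "(a \<cdot>\<^sub>m (U * A * transpose_mat U)) * (b \<cdot>\<^sub>m (U * B * transpose_mat U))
      = a \<cdot>\<^sub>m (b \<cdot>\<^sub>m ((U * A * transpose_mat U) * (U * B * transpose_mat U)))"
    unfolding mult_smult_assoc_mat[OF X smult_carrier_mat[OF Y], of a] mult_smult_distrib[OF X Y, of b] ..
  have "(U * A * transpose_mat U) * (U * B * transpose_mat U) = (U * A * transpose_mat U) * (U * (B * transpose_mat U))"
    unfolding assoc_mult_mat[OF U(1) B Ut] ..
  also have "\<dots> = (U * A) * (B * transpose_mat U)"
    by (rule mid_cancel[OF U UA BU])
  also have "\<dots> = ((U * A) * B) * transpose_mat U"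
    by (rule assoc_mult_mat[OF UA B Ut, symmetric])
  also have "(U * A) * B = U * (A * B)"
    by (rule assoc_mult_mat[OF U(1) A B])
  finally have e: "(U * A * transpose_mat U) * (U * B * transpose_mat U) = U * (A * B) * transpose_mat U" .
  show ?thesis unfolding 1 smult_smult' e ..
qed

locale tsetup = zsetup +
  fixes U :: "nat \<Rightarrow> real mat" and c :: real and Xst :: "int \<Rightarrow> 'a \<Rightarrow> tensor"
  assumes p_pos: "\<forall>k < length ps. ps ! k \<ge> 1"
    and Z_mean: "\<forall>t. \<forall>is \<in> tidx ps. integral\<^sup>L M (\<lambda>\<omega>. Z t \<omega> is) = 0"
    and Z_cov: "\<forall>t. \<forall>is \<in> tidx ps. \<forall>js \<in> tidx ps.
        integral\<^sup>L M (\<lambda>\<omega>. (Z t \<omega> is - integral\<^sup>L M (\<lambda>\<omega>'. Z t \<omega>' is))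
                         * (Z t \<omega> js - integral\<^sup>L M (\<lambda>\<omega>'. Z t \<omega>' js)))
        = (if is = js then 1 else 0)"
    and U_orth: "\<forall>m < length ps. U m \<in> carrier_mat (ps ! m) (ps ! m)
                   \<and> transpose_mat (U m) * U m = 1\<^sub>m (ps ! m)"
    and Xst_eq: "\<forall>t. \<forall>\<omega> \<in> space M. \<forall>is \<in> tidx ps.
                   Xst t \<omega> is = c * mode_prods ps U (Z t \<omega>) is"
begin

lemma Uc: "m < length ps \<Longrightarrow> U m \<in> carrier_mat (ps ! m) (ps ! m)" using U_orth by auto
lemma Uo: "m < length ps \<Longrightarrow> transpose_mat (U m) * U m = 1\<^sub>m (ps ! m)" using U_orth by auto

lemma Xgram:
  assumes m: "m < length ps" and \<omega>: "\<omega> \<in> space M"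
  shows "gram ps m (Xst t \<omega>) (Xst s \<omega>) = (c * c) \<cdot>\<^sub>m (U m * gram ps m (Z t \<omega>) (Z s \<omega>) * transpose_mat (U m))"
proof -
  have "gram ps m (Xst t \<omega>) (Xst s \<omega>) = gram ps m (\<lambda>ix. c * mode_prods ps U (Z t \<omega>) ix) (\<lambda>ix. c * mode_prods ps U (Z s \<omega>) ix)"
    using Xst_eq \<omega> by (intro gram_cong) auto
  also have "\<dots> = (c * c) \<cdot>\<^sub>m gram ps m (mode_prods ps U (Z t \<omega>)) (mode_prods ps U (Z s \<omega>))"
    by (rule gram_smult)
  also have "\<dots> = (c * c) \<cdot>\<^sub>m (U m * gram ps m (Z t \<omega>) (Z s \<omega>) * transpose_mat (U m))"
    using gram_mode_prods[OF m U_orth] by simp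
  finally show ?thesis .
qed

lemma ok_gram: "m < length ps \<Longrightarrow> mexp_ok M (ps ! m) (\<lambda>\<omega>. gram ps m (Z t \<omega>) (Z s \<omega>))"
  unfolding mexp_ok_def using int_gram by auto

lemma ok_prod: assumes m: "m < length ps"
  shows "mexp_ok M (ps ! m) (\<lambda>\<omega>. gram ps m (Z t1 \<omega>) (Z t2 \<omega>) * gram ps m (Z t3 \<omega>) (Z t4 \<omega>))"
  unfolding mexp_ok_def
proof (intro conjI allI impI)
  fix \<omega> show "gram ps m (Z t1 \<omega>) (Z t2 \<omega>) * gram ps m (Z t3 \<omega>) (Z t4 \<omega>) \<in> carrier_mat (ps ! m) (ps ! m)"
    by (rule mult_carrier_mat[OF gram_carrier gram_carrier])
next
  fix x y assume x: "x < ps ! m" and y: "y < ps ! m"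
  have "integrable M (\<lambda>\<omega>. \<Sum>z<ps ! m. gram ps m (Z t1 \<omega>) (Z t2 \<omega>) $$ (x, z) * gram ps m (Z t3 \<omega>) (Z t4 \<omega>) $$ (z, y))"
    by (rule Bochner_Integration.integrable_sum, rule int_gram2[OF m x _ _ y]) auto
  moreover have "\<And>\<omega>. (gram ps m (Z t1 \<omega>) (Z t2 \<omega>) * gram ps m (Z t3 \<omega>) (Z t4 \<omega>)) $$ (x, y)
      = (\<Sum>z<ps ! m. gram ps m (Z t1 \<omega>) (Z t2 \<omega>) $$ (x, z) * gram ps m (Z t3 \<omega>) (Z t4 \<omega>) $$ (z, y))"
    by (rule mult_index2[OF gram_carrier gram_carrier x y])
  ultimately show "integrable M (\<lambda>\<omega>. (gram ps m (Z t1 \<omega>) (Z t2 \<omega>) * gram ps m (Z t3 \<omega>) (Z t4 \<omega>)) $$ (x, y))"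
    by simp
qed

definition sfun :: "nat \<Rightarrow> nat \<Rightarrow> nat \<Rightarrow> int \<Rightarrow> int \<Rightarrow> 'a \<Rightarrow> real" where
  "sfun m i j t1 t2 \<omega> = (\<Sum>k<ps ! m. \<Sum>l<ps ! m. U m $$ (i, k) * gram ps m (Z t1 \<omega>) (Z t2 \<omega>) $$ (k, l) * U m $$ (j, l))"

lemma ok_s: assumes m: "m < length ps"
  shows "mexp_ok M (ps ! m) (\<lambda>\<omega>. sfun m i j t1 t2 \<omega> \<cdot>\<^sub>m gram ps m (Z t3 \<omega>) (Z t4 \<omega>))"
  unfolding mexp_ok_def
proof (intro conjI allI impI)
  fix \<omega> show "sfun m i j t1 t2 \<omega> \<cdot>\<^sub>m gram ps m (Z t3 \<omega>) (Z t4 \<omega>) \<in> carrier_mat (ps ! m) (ps ! m)" by simp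
next
  fix x y assume x: "x < ps ! m" and y: "y < ps ! m"
  have "integrable M (\<lambda>\<omega>. \<Sum>k<ps ! m. \<Sum>l<ps ! m. U m $$ (i, k) * U m $$ (j, l) *
       (gram ps m (Z t1 \<omega>) (Z t2 \<omega>) $$ (k, l) * gram ps m (Z t3 \<omega>) (Z t4 \<omega>) $$ (x, y)))"
    by (rule Bochner_Integration.integrable_sum, rule Bochner_Integration.integrable_sum,
        rule integrable_mult_right, rule int_gram2[OF m _ _ x y]) auto
  moreover have "\<And>\<omega>. (sfun m i j t1 t2 \<omega> \<cdot>\<^sub>m gram ps m (Z t3 \<omega>) (Z t4 \<omega>)) $$ (x, y)
     = (\<Sum>k<ps ! m. \<Sum>l<ps ! m. U m $$ (i, k) * U m $$ (j, l) *
       (gram ps m (Z t1 \<omega>) (Z t2 \<omega>) $$ (k, l) * gram ps m (Z t3 \<omega>) (Z t4 \<omega>) $$ (x, y)))"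
    using x y by (simp add: sfun_def sum_distrib_left mult_ac)
  ultimately show "integrable M (\<lambda>\<omega>. (sfun m i j t1 t2 \<omega> \<cdot>\<^sub>m gram ps m (Z t3 \<omega>) (Z t4 \<omega>)) $$ (x, y))"
    by simp
qed

lemma caseS:
  assumes m: "m < length ps"
  shows "transpose_mat (U m) * Sigma_m M ps m Xst t \<tau> * U m = (c * c) \<cdot>\<^sub>m Sigma_m M ps m Z t \<tau>"
  unfolding Sigma_gram[OF m]
  by (rule key2[OF ok_gram[OF m] Uc[OF m] Uo[OF m]]) (rule Xgram[OF m])

lemma caseB:
  assumes m: "m < length ps"
  shows "transpose_mat (U m) * B_m M ps m Xst t \<tau> * U m = ((c * c) * (c * c)) \<cdot>\<^sub>m B_m M ps m Z t \<tau>"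
  unfolding B_gram[OF m]
proof (rule key2[OF ok_prod[OF m] Uc[OF m] Uo[OF m]])
  fix \<omega> assume \<omega>: "\<omega> \<in> space M"
  show "gram ps m (Xst t \<omega>) (Xst (t + \<tau>) \<omega>) * gram ps m (Xst (t + \<tau>) \<omega>) (Xst t \<omega>) =
     (c * c * (c * c)) \<cdot>\<^sub>m (U m * (gram ps m (Z t \<omega>) (Z (t + \<tau>) \<omega>) * gram ps m (Z (t + \<tau>) \<omega>) (Z t \<omega>)) * transpose_mat (U m))"
    unfolding Xgram[OF m \<omega>] by (rule prod_conj[OF Uc[OF m] Uo[OF m] gram_carrier gram_carrier])
qed

end



lemma mat_expect_dims[simp]: "dim_row (mat_expect M n k F) = n" "dim_col (mat_expect M n k F) = k"
  by (simp_all add: mat_expect_def)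

lemma conj_lin:
  assumes U: "U \<in> carrier_mat p p" and A: "A1 \<in> carrier_mat p p" "A2 \<in> carrier_mat p p" "A3 \<in> carrier_mat p p" "A4 \<in> carrier_mat p p"
    and a: "a < p" and b: "b < p"
  shows "(transpose_mat U * (A1 + A2 - A3 - A4) * U) $$ (a, b)
    = (transpose_mat U * A1 * U) $$ (a, b) + (transpose_mat U * A2 * U) $$ (a, b)
      - (transpose_mat U * A3 * U) $$ (a, b) - (transpose_mat U * (A4 :: real mat) * U) $$ (a, b)"
proof -
  have Ut: "transpose_mat U \<in> carrier_mat p p" using U by simp
  have S: "A1 + A2 - A3 - A4 \<in> carrier_mat p p" by (rule minus_carrier_mat[OF A(4)])
  have e: "\<And>B. B \<in> carrier_mat p p \<Longrightarrow> (transpose_mat U * B * U) $$ (a, b)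
     = (\<Sum>x<p. \<Sum>y<p. transpose_mat U $$ (a, x) * B $$ (x, y) * U $$ (y, b))"
    by (rule mult3_index[OF Ut _ U a b])
  have "(\<Sum>x<p. \<Sum>y<p. transpose_mat U $$ (a, x) * (A1 + A2 - A3 - A4) $$ (x, y) * U $$ (y, b))
    = (\<Sum>x<p. \<Sum>y<p. transpose_mat U $$ (a, x) * A1 $$ (x, y) * U $$ (y, b) + transpose_mat U $$ (a, x) * A2 $$ (x, y) * U $$ (y, b)
       - transpose_mat U $$ (a, x) * A3 $$ (x, y) * U $$ (y, b) - transpose_mat U $$ (a, x) * A4 $$ (x, y) * U $$ (y, b))"
    using A by (intro sum.cong refl) (simp add: algebra_simps)
  then show ?thesis
    unfolding e[OF S] e[OF A(1)] e[OF A(2)] e[OF A(3)] e[OF A(4)]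
    by (simp only: sum.distrib sum_subtractf)
qed

context tsetup begin

lemma rho_pos: assumes m: "m < length ps" shows "rho ps m > 0"
proof -
  have "0 \<notin> set (other_dims ps m)"
  proof
    assume "0 \<in> set (other_dims ps m)"
    then have "0 \<in> set ps" unfolding other_dims_def
      by (metis Un_iff set_append in_set_takeD in_set_dropD)
    then obtain k where k: "k < length ps" "ps ! k = 0" by (metis in_set_conv_nth)
    have "ps ! k \<ge> 1" using p_pos k(1) by blast
    then show False using k(2) by linarith
  qed
  then have "prod_list (other_dims ps m) \<noteq> 0" by (metis prod_list_zero_iff)
  then show ?thesis unfolding rho_def by linarith
qed

lemma sigma0Z:
  assumes m: "m < length ps"
  shows "Sigma_m M ps m Z t 0 = 1\<^sub>m (ps ! m)"
proof (rule eq_matI)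
  fix a b assume "a < dim_row (1\<^sub>m (ps ! m))" "b < dim_col (1\<^sub>m (ps ! m))"
  then have a: "a < ps ! m" and b: "b < ps ! m" by auto
  let ?od = "other_dims ps m"
  let ?ck = "\<lambda>k. mr_decode ?od k"
  have ck: "\<And>k. k < rho ps m \<Longrightarrow> ?ck k \<in> tidx ?od"
    using mr_decode_bij[of ?od] unfolding bij_betw_def rho_def by auto
  have ins: "\<And>k x. k < rho ps m \<Longrightarrow> x < ps ! m \<Longrightarrow> ins_at m x (?ck k) \<in> tidx ps"
    using ins_at_bij[OF m] ck unfolding bij_betw_def by blast
  have lenck: "\<And>k. k < rho ps m \<Longrightarrow> m \<le> length (?ck k)"
  proof -
    fix k assume k: "k < rho ps m"
    have "length (?ck k) = length ?od" by (rule tidx_length[OF ck[OF k]])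
    then show "m \<le> length (?ck k)" using m by (simp add: other_dims_def)
  qed
  have eqv: "\<And>k. k < rho ps m \<Longrightarrow> (ins_at m a (?ck k) = ins_at m b (?ck k)) = (a = b)"
  proof -
    fix k assume k: "k < rho ps m"
    have "ins_at m a (?ck k) ! m = a" "ins_at m b (?ck k) ! m = b"
      using lenck[OF k] by (simp_all add: ins_at_def nth_append)
    then show "(ins_at m a (?ck k) = ins_at m b (?ck k)) = (a = b)" by metis
  qed
  have cov: "\<And>ix jx. ix \<in> tidx ps \<Longrightarrow> jx \<in> tidx ps \<Longrightarrow> integral\<^sup>L M (\<lambda>\<omega>. Z t \<omega> ix * Z t \<omega> jx) = (if ix = jx then 1 else 0)"
    using Z_cov Z_mean by auto
  have ent: "\<And>\<omega>. (flat ps m (Z t \<omega>) * transpose_mat (flat ps m (Z t \<omega>))) $$ (a, b)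
      = (\<Sum>k<rho ps m. Z t \<omega> (ins_at m a (?ck k)) * Z t \<omega> (ins_at m b (?ck k)))"
    using a b by (simp add: mult_index2[OF flat_carrier, of _ _ "ps ! m"] flat_def scalar_prod_def atLeast0LessThan)
  have "Sigma_m M ps m Z t 0 $$ (a, b)
      = 1 / real (rho ps m) * integral\<^sup>L M (\<lambda>\<omega>. (flat ps m (Z t \<omega>) * transpose_mat (flat ps m (Z t \<omega>))) $$ (a, b))"
    using a b by (simp add: Sigma_m_def mat_expect_def)
  also have "\<dots> = 1 / real (rho ps m) * (\<Sum>k<rho ps m. integral\<^sup>L M (\<lambda>\<omega>. Z t \<omega> (ins_at m a (?ck k)) * Z t \<omega> (ins_at m b (?ck k))))"
    unfolding ent
    by (subst Bochner_Integration.integral_sum) (auto intro!: intZ2 ins a b)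
  also have "\<dots> = 1 / real (rho ps m) * (\<Sum>k<rho ps m. (if a = b then 1 else 0))"
  proof (intro arg_cong[where f="\<lambda>x. 1 / real (rho ps m) * x"] sum.cong refl)
    fix k assume "k \<in> {..<rho ps m}"
    then have k: "k < rho ps m" by simp
    show "integral\<^sup>L M (\<lambda>\<omega>. Z t \<omega> (ins_at m a (?ck k)) * Z t \<omega> (ins_at m b (?ck k))) = (if a = b then 1 else 0)"
      using cov[OF ins[OF k a] ins[OF k b]] eqv[OF k] by simp
  qed
  also have "\<dots> = 1\<^sub>m (ps ! m) $$ (a, b)"
    using a b rho_pos[OF m] by simp
  finally show "Sigma_m M ps m Z t 0 $$ (a, b) = 1\<^sub>m (ps ! m) $$ (a, b)" .
qed (auto simp: Sigma_m_def)


lemma UUt: assumes m: "m < length ps" shows "U m * transpose_mat (U m) = 1\<^sub>m (ps ! m)"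
proof -
  have Ut: "transpose_mat (U m) \<in> carrier_mat (ps ! m) (ps ! m)" using Uc[OF m] by simp
  show ?thesis by (rule mat_mult_left_right_inverse[OF Ut Uc[OF m] Uo[OF m]])
qed

lemma sigma0X:
  assumes m: "m < length ps"
  shows "Sigma_m M ps m Xst t 0 = (c * c) \<cdot>\<^sub>m 1\<^sub>m (ps ! m)"
proof -
  have "Sigma_m M ps m Xst t 0 = (c * c) \<cdot>\<^sub>m (U m * Sigma_m M ps m Z t 0 * transpose_mat (U m))"
    unfolding Sigma_gram[OF m, where W=Xst] Sigma_gram[OF m, where W=Z]
    by (rule key1[OF ok_gram[OF m] Uc[OF m]]) (rule Xgram[OF m])
  also have "U m * Sigma_m M ps m Z t 0 * transpose_mat (U m) = 1\<^sub>m (ps ! m)"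
    unfolding sigma0Z[OF m] using Uc[OF m] UUt[OF m] by simp
  finally show ?thesis .
qed

lemma B4case:
  assumes m: "m < length ps" and i: "i < ps ! m" and j: "j < ps ! m" and a: "a < ps ! m" and b: "b < ps ! m"
  shows "(transpose_mat (U m) * B4_m M ps m Xst t \<alpha> \<beta> \<gamma> \<delta> i j * U m) $$ (a, b)
    = (c * c * (c * c)) * (\<Sum>k<ps ! m. \<Sum>l<ps ! m. U m $$ (i, k) * U m $$ (j, l) * B4_m M ps m Z t \<alpha> \<beta> \<gamma> \<delta> k l $$ (a, b))"
proof -
  let ?p = "ps ! m"
  let ?F = "\<lambda>\<omega>. sfun m i j (t + \<alpha>) (t + \<beta>) \<omega> \<cdot>\<^sub>m gram ps m (Z (t + \<gamma>) \<omega>) (Z (t + \<delta>) \<omega>)"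
  let ?P1 = "\<lambda>\<omega>. gram ps m (Z (t + \<alpha>) \<omega>) (Z (t + \<beta>) \<omega>)"
  let ?P2 = "\<lambda>\<omega>. gram ps m (Z (t + \<gamma>) \<omega>) (Z (t + \<delta>) \<omega>)"
  have Ucm: "U m \<in> carrier_mat ?p ?p" by (rule Uc[OF m])
  have Utc: "transpose_mat (U m) \<in> carrier_mat ?p ?p" using Ucm by simp
  have G: "\<And>\<omega>. \<omega> \<in> space M \<Longrightarrow> gram ps m (Xst (t + \<alpha>) \<omega>) (Xst (t + \<beta>) \<omega>) $$ (i, j) \<cdot>\<^sub>m gram ps m (Xst (t + \<gamma>) \<omega>) (Xst (t + \<delta>) \<omega>)
      = (c * c * (c * c)) \<cdot>\<^sub>m (U m * ?F \<omega> * transpose_mat (U m))"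
  proof -
    fix \<omega> assume \<omega>: "\<omega> \<in> space M"
    have s: "((c * c) \<cdot>\<^sub>m (U m * ?P1 \<omega> * transpose_mat (U m))) $$ (i, j) = c * c * sfun m i j (t + \<alpha>) (t + \<beta>) \<omega>"
    proof -
      have "((c * c) \<cdot>\<^sub>m (U m * ?P1 \<omega> * transpose_mat (U m))) $$ (i, j) = c * c * (U m * ?P1 \<omega> * transpose_mat (U m)) $$ (i, j)"
        using i j Ucm by (intro index_smult_mat(1)) auto
      also have "(U m * ?P1 \<omega> * transpose_mat (U m)) $$ (i, j) = sfun m i j (t + \<alpha>) (t + \<beta>) \<omega>"
        unfolding mult3_index[OF Ucm gram_carrier Utc i j] sfun_def using j Ucm
        by (intro sum.cong refl) auto
      finally show ?thesis .
    qed
    have "gram ps m (Xst (t + \<alpha>) \<omega>) (Xst (t + \<beta>) \<omega>) $$ (i, j) \<cdot>\<^sub>m gram ps m (Xst (t + \<gamma>) \<omega>) (Xst (t + \<delta>) \<omega>)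
      = (c * c * sfun m i j (t + \<alpha>) (t + \<beta>) \<omega>) \<cdot>\<^sub>m ((c * c) \<cdot>\<^sub>m (U m * ?P2 \<omega> * transpose_mat (U m)))"
      unfolding Xgram[OF m \<omega>] s ..
    also have "\<dots> = (c * c * (c * c)) \<cdot>\<^sub>m (sfun m i j (t + \<alpha>) (t + \<beta>) \<omega> \<cdot>\<^sub>m (U m * ?P2 \<omega> * transpose_mat (U m)))"
      unfolding smult_smult' by (simp add: mult_ac)
    also have "sfun m i j (t + \<alpha>) (t + \<beta>) \<omega> \<cdot>\<^sub>m (U m * ?P2 \<omega> * transpose_mat (U m)) = U m * ?F \<omega> * transpose_mat (U m)"
      by (rule conj_smult[OF Ucm gram_carrier, symmetric])
    finally show "gram ps m (Xst (t + \<alpha>) \<omega>) (Xst (t + \<beta>) \<omega>) $$ (i, j) \<cdot>\<^sub>m gram ps m (Xst (t + \<gamma>) \<omega>) (Xst (t + \<delta>) \<omega>)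
      = (c * c * (c * c)) \<cdot>\<^sub>m (U m * ?F \<omega> * transpose_mat (U m))" .
  qed
  have K: "transpose_mat (U m) * B4_m M ps m Xst t \<alpha> \<beta> \<gamma> \<delta> i j * U m
      = (c * c * (c * c)) \<cdot>\<^sub>m ((1 / real (rho ps m)) \<cdot>\<^sub>m mat_expect M ?p ?p ?F)"
    unfolding B4_gram[OF m]
    by (rule key2[OF ok_s[OF m] Uc[OF m] Uo[OF m]]) (rule G)
  have int: "\<And>k l. k \<in> {..<?p} \<Longrightarrow> l \<in> {..<?p} \<Longrightarrow> integrable M (\<lambda>\<omega>. U m $$ (i, k) * U m $$ (j, l) * (?P1 \<omega> $$ (k, l) * ?P2 \<omega> $$ (a, b)))"
    using int_gram2[OF m _ _ a b] by auto
  have "(transpose_mat (U m) * B4_m M ps m Xst t \<alpha> \<beta> \<gamma> \<delta> i j * U m) $$ (a, b)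
     = (c * c * (c * c)) * ((1 / real (rho ps m)) * integral\<^sup>L M (\<lambda>\<omega>. ?F \<omega> $$ (a, b)))"
    unfolding K using a b by (simp add: mat_expect_index)
  also have "(\<lambda>\<omega>. ?F \<omega> $$ (a, b)) = (\<lambda>\<omega>. \<Sum>k<?p. \<Sum>l<?p. U m $$ (i, k) * U m $$ (j, l) * (?P1 \<omega> $$ (k, l) * ?P2 \<omega> $$ (a, b)))"
    using a b by (simp add: sfun_def sum_distrib_left mult_ac)
  also have "integral\<^sup>L M \<dots> = (\<Sum>k<?p. \<Sum>l<?p. U m $$ (i, k) * U m $$ (j, l) * integral\<^sup>L M (\<lambda>\<omega>. ?P1 \<omega> $$ (k, l) * ?P2 \<omega> $$ (a, b)))"
  proof -
    have "integral\<^sup>L M (\<lambda>\<omega>. \<Sum>k<?p. \<Sum>l<?p. U m $$ (i, k) * U m $$ (j, l) * (?P1 \<omega> $$ (k, l) * ?P2 \<omega> $$ (a, b)))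
      = (\<Sum>k<?p. integral\<^sup>L M (\<lambda>\<omega>. \<Sum>l<?p. U m $$ (i, k) * U m $$ (j, l) * (?P1 \<omega> $$ (k, l) * ?P2 \<omega> $$ (a, b))))"
      by (rule Bochner_Integration.integral_sum[where f="\<lambda>k \<omega>. \<Sum>l<?p. U m $$ (i, k) * U m $$ (j, l) * (?P1 \<omega> $$ (k, l) * ?P2 \<omega> $$ (a, b))"])
        (rule Bochner_Integration.integrable_sum, rule int)
    also have "\<dots> = (\<Sum>k<?p. \<Sum>l<?p. integral\<^sup>L M (\<lambda>\<omega>. U m $$ (i, k) * U m $$ (j, l) * (?P1 \<omega> $$ (k, l) * ?P2 \<omega> $$ (a, b))))"
      by (intro sum.cong refl Bochner_Integration.integral_sum int) auto
    also have "\<dots> = (\<Sum>k<?p. \<Sum>l<?p. U m $$ (i, k) * U m $$ (j, l) * integral\<^sup>L M (\<lambda>\<omega>. ?P1 \<omega> $$ (k, l) * ?P2 \<omega> $$ (a, b)))"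
      by simp
    finally show ?thesis .
  qed
  also have "(c * c * (c * c)) * ((1 / real (rho ps m)) * (\<Sum>k<?p. \<Sum>l<?p. U m $$ (i, k) * U m $$ (j, l) * integral\<^sup>L M (\<lambda>\<omega>. ?P1 \<omega> $$ (k, l) * ?P2 \<omega> $$ (a, b))))
     = (c * c * (c * c)) * (\<Sum>k<?p. \<Sum>l<?p. U m $$ (i, k) * U m $$ (j, l) * ((1 / real (rho ps m)) * integral\<^sup>L M (\<lambda>\<omega>. ?P1 \<omega> $$ (k, l) * ?P2 \<omega> $$ (a, b))))"
    by (simp add: sum_distrib_left mult_ac)
  also have "\<dots> = (c * c * (c * c)) * (\<Sum>k<?p. \<Sum>l<?p. U m $$ (i, k) * U m $$ (j, l) * B4_m M ps m Z t \<alpha> \<beta> \<gamma> \<delta> k l $$ (a, b))"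
    unfolding B4_gram[OF m] using a b by (simp add: mat_expect_index)
  finally show ?thesis .
qed

end



lemma dd:
  fixes f :: "nat \<Rightarrow> nat \<Rightarrow> real"
  assumes "i < p" "j < p"
  shows "(\<Sum>x<p. \<Sum>y<p. if x = i \<and> y = j then f x y else 0) = f i j"
proof -
  have "\<And>x. (\<Sum>y<p. if x = i \<and> y = j then f x y else 0) = (if x = i then f x j else 0)"
    using assms by (auto simp: sum.delta' cong: if_cong)
  then show ?thesis using assms by (simp add: sum.delta')
qed

lemma ddiag:
  fixes f :: "nat \<Rightarrow> nat \<Rightarrow> real"
  shows "(\<Sum>x<p. \<Sum>y<p. if x = y then f x y else 0) = (\<Sum>x<p. f x x)"
  by (rule sum.cong) (auto simp: sum.delta)

definition Wm :: "nat \<Rightarrow> nat \<Rightarrow> nat \<Rightarrow> real mat" where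
  "Wm p i j = Eij p i j + Eij p j i + 1\<^sub>m p"

lemma Wm_carrier[simp]: "Wm p i j \<in> carrier_mat p p"
  by (simp add: Wm_def Eij_def)

lemma Wm_dims[simp]: "dim_row (Wm p i j) = p" "dim_col (Wm p i j) = p"
  by (simp_all add: Wm_def Eij_def)

lemma Wm_entry: "x < p \<Longrightarrow> y < p \<Longrightarrow> Wm p i j $$ (x, y)
   = (if x = i \<and> y = j then 1 else 0) + (if x = j \<and> y = i then 1 else 0) + (if x = y then 1 else 0)"
  by (simp add: Wm_def Eij_def)

lemma conjW:
  assumes U: "U \<in> carrier_mat p p" "transpose_mat U * U = 1\<^sub>m p" and i: "i < p" and j: "j < p" and a: "a < p" and b: "b < p" and ab: "a \<noteq> b"
  shows "(transpose_mat U * Wm p i j * U) $$ (a, b) = U $$ (i, a) * U $$ (j, b) + U $$ (j, a) * U $$ (i, b)"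
proof -
  have Ut: "transpose_mat U \<in> carrier_mat p p" using U by simp
  have "(transpose_mat U * Wm p i j * U) $$ (a, b) = (\<Sum>x<p. \<Sum>y<p. transpose_mat U $$ (a, x) * Wm p i j $$ (x, y) * U $$ (y, b))"
    by (rule mult3_index[OF Ut Wm_carrier U(1) a b])
  also have "\<dots> = (\<Sum>x<p. \<Sum>y<p. (if x = i \<and> y = j then U $$ (x, a) * U $$ (y, b) else 0)
      + (if x = j \<and> y = i then U $$ (x, a) * U $$ (y, b) else 0) + (if x = y then U $$ (x, a) * U $$ (y, b) else 0))"
    using U a by (intro sum.cong refl) (auto simp: Wm_entry algebra_simps)
  also have "\<dots> = U $$ (i, a) * U $$ (j, b) + U $$ (j, a) * U $$ (i, b) + (\<Sum>x<p. U $$ (x, a) * U $$ (x, b))"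
    by (simp only: sum.distrib dd[OF i j] dd[OF j i] ddiag)
  also have "(\<Sum>x<p. U $$ (x, a) * U $$ (x, b)) = 0"
    using orth_sum[OF U a b] ab by simp
  finally show ?thesis by simp
qed

lemma smult_one_conj:
  assumes W: "W \<in> carrier_mat p p"
  shows "(k \<cdot>\<^sub>m 1\<^sub>m p) * W * transpose_mat (k \<cdot>\<^sub>m 1\<^sub>m p) = (k * k) \<cdot>\<^sub>m (W :: real mat)"
proof -
  have t: "transpose_mat (k \<cdot>\<^sub>m 1\<^sub>m p) = k \<cdot>\<^sub>m 1\<^sub>m p" by (rule eq_matI) auto
  have 1: "(k \<cdot>\<^sub>m 1\<^sub>m p) * W = k \<cdot>\<^sub>m W"
    using mult_smult_assoc_mat[OF one_carrier_mat W, of k] W by simp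
  have 2: "(k \<cdot>\<^sub>m W) * (k \<cdot>\<^sub>m 1\<^sub>m p) = k \<cdot>\<^sub>m (k \<cdot>\<^sub>m W)"
    using mult_smult_assoc_mat[OF W smult_carrier_mat[OF one_carrier_mat], of k k] mult_smult_distrib[OF W one_carrier_mat, of k] W by simp
  show ?thesis unfolding t 1 2 smult_smult' ..
qed

lemma idx4:
  assumes "A1 \<in> carrier_mat p p" "A2 \<in> carrier_mat p p" "A3 \<in> carrier_mat p p" "A4 \<in> carrier_mat p p" "a < p" "b < p"
  shows "(A1 + A2 - A3 - A4) $$ (a, b) = A1 $$ (a, b) + A2 $$ (a, b) - A3 $$ (a, b) - (A4 :: real mat) $$ (a, b)"
  using assms by simp

context tsetup begin

lemma SXcase:
  assumes m: "m < length ps" and i: "i < ps ! m" and j: "j < ps ! m" and a: "a < ps ! m" and b: "b < ps ! m" and ab: "a \<noteq> b"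
  shows "(transpose_mat (U m) * (Sigma_m M ps m Xst t 0 * (Eij (ps ! m) i j + Eij (ps ! m) j i + 1\<^sub>m (ps ! m))
          * transpose_mat (Sigma_m M ps m Xst t 0)) * U m) $$ (a, b)
    = (c * c * (c * c)) * (U m $$ (i, a) * U m $$ (j, b) + U m $$ (j, a) * U m $$ (i, b))"
proof -
  have S: "Sigma_m M ps m Xst t 0 * (Eij (ps ! m) i j + Eij (ps ! m) j i + 1\<^sub>m (ps ! m))
          * transpose_mat (Sigma_m M ps m Xst t 0) = (c * c * (c * c)) \<cdot>\<^sub>m Wm (ps ! m) i j"
    unfolding sigma0X[OF m] Wm_def[symmetric] by (rule smult_one_conj[OF Wm_carrier])
  have "(transpose_mat (U m) * ((c * c * (c * c)) \<cdot>\<^sub>m Wm (ps ! m) i j) * U m)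
     = (c * c * (c * c)) \<cdot>\<^sub>m (transpose_mat (U m) * Wm (ps ! m) i j * U m)"
    by (rule smult_conj[OF Uc[OF m] Wm_carrier])
  then show ?thesis unfolding S using a b Uc[OF m] conjW[OF Uc[OF m] Uo[OF m] i j a b ab] by simp
qed

lemma SZcase:
  assumes m: "m < length ps" and k: "k < ps ! m" and l: "l < ps ! m" and a: "a < ps ! m" and b: "b < ps ! m" and ab: "a \<noteq> b"
  shows "(Sigma_m M ps m Z t 0 * (Eij (ps ! m) k l + Eij (ps ! m) l k + 1\<^sub>m (ps ! m))
          * transpose_mat (Sigma_m M ps m Z t 0)) $$ (a, b)
    = (if a = k \<and> b = l then 1 else 0) + (if a = l \<and> b = k then 1 else 0)"
proof -
  have "Sigma_m M ps m Z t 0 * (Eij (ps ! m) k l + Eij (ps ! m) l k + 1\<^sub>m (ps ! m))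
          * transpose_mat (Sigma_m M ps m Z t 0) = Wm (ps ! m) k l"
    unfolding sigma0Z[OF m] Wm_def[symmetric] using Wm_carrier[of "ps ! m" k l] by simp
  then show ?thesis using a b ab by (simp add: Wm_entry)
qed


lemma caseC:
  assumes m: "m < length ps" and i: "i < ps ! m" and j: "j < ps ! m"
    and hyp: "\<forall>k < ps ! m. \<forall>l < ps ! m. diagonal_mat (C_m M ps m Z t \<tau> k l)"
  shows "diagonal_mat (transpose_mat (U m) * C_m M ps m Xst t \<tau> i j * U m)"
  unfolding diagonal_mat_def
proof (intro allI impI)
  fix a b assume a0: "a < dim_row (transpose_mat (U m) * C_m M ps m Xst t \<tau> i j * U m)"
    and b0: "b < dim_col (transpose_mat (U m) * C_m M ps m Xst t \<tau> i j * U m)" and ab: "a \<noteq> b"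
  let ?p = "ps ! m"
  have Ucm: "U m \<in> carrier_mat ?p ?p" by (rule Uc[OF m])
  have a: "a < ?p" and b: "b < ?p" using a0 b0 Ucm by auto
  let ?k4 = "c * c * (c * c)"
  let ?B1 = "\<lambda>W k l. B4_m M ps m W t 0 \<tau> \<tau> 0 k l"
  let ?B2 = "\<lambda>W k l. B4_m M ps m W t 0 \<tau> 0 \<tau> k l"
  let ?B3 = "\<lambda>W k l. B4_m M ps m W t \<tau> \<tau> 0 0 k l"
  let ?S = "\<lambda>W k l. Sigma_m M ps m W t 0 * (Eij ?p k l + Eij ?p l k + 1\<^sub>m ?p) * transpose_mat (Sigma_m M ps m W t 0)"
  have cB: "\<And>W \<alpha> \<beta> \<gamma> \<delta> k l. B4_m M ps m W t \<alpha> \<beta> \<gamma> \<delta> k l \<in> carrier_mat ?p ?p"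
    by (simp add: B4_m_def)
  have cS: "\<And>W k l. ?S W k l \<in> carrier_mat ?p ?p"
    by (rule mult_carrier_mat[where n="?p"], rule mult_carrier_mat[where n="?p"]) (auto simp: Sigma_m_def Eij_def)
  have "(transpose_mat (U m) * C_m M ps m Xst t \<tau> i j * U m) $$ (a, b)
     = (transpose_mat (U m) * ?B1 Xst i j * U m) $$ (a, b) + (transpose_mat (U m) * ?B2 Xst i j * U m) $$ (a, b)
      - (transpose_mat (U m) * ?B3 Xst i j * U m) $$ (a, b) - (transpose_mat (U m) * ?S Xst i j * U m) $$ (a, b)"
    unfolding C_m_def by (rule conj_lin[OF Ucm cB cB cB cS a b])
  also have "\<dots> = ?k4 * (\<Sum>k<?p. \<Sum>l<?p. U m $$ (i, k) * U m $$ (j, l) * ?B1 Z k l $$ (a, b))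
      + ?k4 * (\<Sum>k<?p. \<Sum>l<?p. U m $$ (i, k) * U m $$ (j, l) * ?B2 Z k l $$ (a, b))
      - ?k4 * (\<Sum>k<?p. \<Sum>l<?p. U m $$ (i, k) * U m $$ (j, l) * ?B3 Z k l $$ (a, b))
      - ?k4 * (U m $$ (i, a) * U m $$ (j, b) + U m $$ (j, a) * U m $$ (i, b))"
    unfolding B4case[OF m i j a b] SXcase[OF m i j a b ab] ..
  also have "\<dots> = ?k4 * ((\<Sum>k<?p. \<Sum>l<?p. U m $$ (i, k) * U m $$ (j, l) * (?B1 Z k l $$ (a, b) + ?B2 Z k l $$ (a, b) - ?B3 Z k l $$ (a, b)))
      - (U m $$ (i, a) * U m $$ (j, b) + U m $$ (j, a) * U m $$ (i, b)))"
  proof -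
    have sp: "(\<Sum>k<?p. \<Sum>l<?p. U m $$ (i, k) * U m $$ (j, l) * (?B1 Z k l $$ (a, b) + ?B2 Z k l $$ (a, b) - ?B3 Z k l $$ (a, b)))
      = (\<Sum>k<?p. \<Sum>l<?p. U m $$ (i, k) * U m $$ (j, l) * ?B1 Z k l $$ (a, b))
      + (\<Sum>k<?p. \<Sum>l<?p. U m $$ (i, k) * U m $$ (j, l) * ?B2 Z k l $$ (a, b))
      - (\<Sum>k<?p. \<Sum>l<?p. U m $$ (i, k) * U m $$ (j, l) * ?B3 Z k l $$ (a, b))"
      by (simp only: distrib_left right_diff_distrib sum.distrib sum_subtractf)
    show ?thesis unfolding sp by (simp only: distrib_left right_diff_distrib)
  qed
  finally have E1: "(transpose_mat (U m) * C_m M ps m Xst t \<tau> i j * U m) $$ (a, b)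
    = ?k4 * ((\<Sum>k<?p. \<Sum>l<?p. U m $$ (i, k) * U m $$ (j, l) * (?B1 Z k l $$ (a, b) + ?B2 Z k l $$ (a, b) - ?B3 Z k l $$ (a, b)))
      - (U m $$ (i, a) * U m $$ (j, b) + U m $$ (j, a) * U m $$ (i, b)))" .
  have "(\<Sum>k<?p. \<Sum>l<?p. U m $$ (i, k) * U m $$ (j, l) * (?B1 Z k l $$ (a, b) + ?B2 Z k l $$ (a, b) - ?B3 Z k l $$ (a, b)))
     = (\<Sum>k<?p. \<Sum>l<?p. if k = a \<and> l = b then U m $$ (i, k) * U m $$ (j, l) else 0)
       + (\<Sum>k<?p. \<Sum>l<?p. if k = b \<and> l = a then U m $$ (i, k) * U m $$ (j, l) else 0)"
  proof -
    have "\<And>k l. k < ?p \<Longrightarrow> l < ?p \<Longrightarrow> ?B1 Z k l $$ (a, b) + ?B2 Z k l $$ (a, b) - ?B3 Z k l $$ (a, b)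
       = (if a = k \<and> b = l then 1 else 0) + (if a = l \<and> b = k then 1 else 0)"
    proof -
      fix k l assume k: "k < ?p" and l: "l < ?p"
      have Cc: "C_m M ps m Z t \<tau> k l \<in> carrier_mat ?p ?p"
        unfolding C_m_def by (rule minus_carrier_mat[OF cS])
      have "diagonal_mat (C_m M ps m Z t \<tau> k l)" using hyp k l by blast
      then have "C_m M ps m Z t \<tau> k l $$ (a, b) = 0"
        using Cc a b ab unfolding diagonal_mat_def by auto
      moreover have "C_m M ps m Z t \<tau> k l $$ (a, b) = ?B1 Z k l $$ (a, b) + ?B2 Z k l $$ (a, b) - ?B3 Z k l $$ (a, b) - ?S Z k l $$ (a, b)"
        unfolding C_m_def by (rule idx4[OF cB cB cB cS a b])
      ultimately show "?B1 Z k l $$ (a, b) + ?B2 Z k l $$ (a, b) - ?B3 Z k l $$ (a, b)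
       = (if a = k \<and> b = l then 1 else 0) + (if a = l \<and> b = k then 1 else 0)"
        using SZcase[OF m k l a b ab, of t] by linarith
    qed
    note hk = this
    have "(\<Sum>k<?p. \<Sum>l<?p. U m $$ (i, k) * U m $$ (j, l) * (?B1 Z k l $$ (a, b) + ?B2 Z k l $$ (a, b) - ?B3 Z k l $$ (a, b)))
      = (\<Sum>k<?p. \<Sum>l<?p. (if k = a \<and> l = b then U m $$ (i, k) * U m $$ (j, l) else 0)
       + (if k = b \<and> l = a then U m $$ (i, k) * U m $$ (j, l) else 0))"
    proof (intro sum.cong refl)
      fix k l assume "k \<in> {..<?p}" "l \<in> {..<?p}"
      then have k: "k < ?p" and l: "l < ?p" by auto
      show "U m $$ (i, k) * U m $$ (j, l) * (?B1 Z k l $$ (a, b) + ?B2 Z k l $$ (a, b) - ?B3 Z k l $$ (a, b))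
        = (if k = a \<and> l = b then U m $$ (i, k) * U m $$ (j, l) else 0)
          + (if k = b \<and> l = a then U m $$ (i, k) * U m $$ (j, l) else 0)"
        unfolding hk[OF k l] using ab by (cases "k = a \<and> l = b"; cases "k = b \<and> l = a") auto
    qed
    then show ?thesis by (simp only: sum.distrib)
  qed
  also have "\<dots> = U m $$ (i, a) * U m $$ (j, b) + U m $$ (i, b) * U m $$ (j, a)"
    by (simp only: dd[OF a b] dd[OF b a])
  finally have E2: "(\<Sum>k<?p. \<Sum>l<?p. U m $$ (i, k) * U m $$ (j, l) * (?B1 Z k l $$ (a, b) + ?B2 Z k l $$ (a, b) - ?B3 Z k l $$ (a, b)))
     = U m $$ (i, a) * U m $$ (j, b) + U m $$ (i, b) * U m $$ (j, a)" .
  show "(transpose_mat (U m) * C_m M ps m Xst t \<tau> i j * U m) $$ (a, b) = 0"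
  proof -
    have cm: "U m $$ (i, b) * U m $$ (j, a) = U m $$ (j, a) * U m $$ (i, b)" by (rule mult.commute)
    show ?thesis unfolding E1 E2 cm by simp
  qed
qed

end

theorem theorem2_aux:
  fixes M :: "'a measure" and ps :: "nat list" and Z :: "int \<Rightarrow> 'a \<Rightarrow> tensor"
    and U :: "nat \<Rightarrow> real mat" and c :: real and Tau :: "int set"
    and Xst :: "int \<Rightarrow> 'a \<Rightarrow> tensor"
  assumes "tsetup M ps Z U c Xst"
  shows
    "((\<forall>m < length ps. \<forall>\<tau> \<in> Tau. \<forall>t. diagonal_mat (Sigma_m M ps m Z t \<tau>))
        \<longrightarrow> (\<forall>m < length ps. \<forall>\<tau> \<in> Tau. \<forall>t.
              diagonal_mat (transpose_mat (U m) * Sigma_m M ps m Xst t \<tau> * U m)))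
   \<and> ((\<forall>m < length ps. \<forall>\<tau> \<in> Tau. \<forall>t. diagonal_mat (B_m M ps m Z t \<tau>))
        \<longrightarrow> (\<forall>m < length ps. \<forall>\<tau> \<in> Tau. \<forall>t.
              diagonal_mat (transpose_mat (U m) * B_m M ps m Xst t \<tau> * U m)))
   \<and> ((\<forall>m < length ps. \<forall>i < ps ! m. \<forall>j < ps ! m. \<forall>\<tau> \<in> Tau. \<forall>t.
          diagonal_mat (C_m M ps m Z t \<tau> i j))
        \<longrightarrow> (\<forall>m < length ps. \<forall>i < ps ! m. \<forall>j < ps ! m. \<forall>\<tau> \<in> Tau. \<forall>t.
              diagonal_mat (transpose_mat (U m) * C_m M ps m Xst t \<tau> i j * U m)))"
proof -
  interpret tsetup M ps Z U c Xst by (rule assms)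
  have 1: "\<And>m \<tau> t. m < length ps \<Longrightarrow> diagonal_mat (Sigma_m M ps m Z t \<tau>) \<Longrightarrow>
     diagonal_mat (transpose_mat (U m) * Sigma_m M ps m Xst t \<tau> * U m)"
  proof -
    fix m \<tau> t assume m: "m < length ps" and d: "diagonal_mat (Sigma_m M ps m Z t \<tau>)"
    show "diagonal_mat (transpose_mat (U m) * Sigma_m M ps m Xst t \<tau> * U m)"
      unfolding caseS[OF m] by (rule diagonal_smult[OF d])
  qed
  have 2: "\<And>m \<tau> t. m < length ps \<Longrightarrow> diagonal_mat (B_m M ps m Z t \<tau>) \<Longrightarrow>
     diagonal_mat (transpose_mat (U m) * B_m M ps m Xst t \<tau> * U m)"
  proof -
    fix m \<tau> t assume m: "m < length ps" and d: "diagonal_mat (B_m M ps m Z t \<tau>)"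
    show "diagonal_mat (transpose_mat (U m) * B_m M ps m Xst t \<tau> * U m)"
      unfolding caseB[OF m] by (rule diagonal_smult[OF d])
  qed
  have 3: "\<And>m i j \<tau> t. m < length ps \<Longrightarrow> i < ps ! m \<Longrightarrow> j < ps ! m \<Longrightarrow>
     \<forall>k < ps ! m. \<forall>l < ps ! m. diagonal_mat (C_m M ps m Z t \<tau> k l) \<Longrightarrow>
     diagonal_mat (transpose_mat (U m) * C_m M ps m Xst t \<tau> i j * U m)"
    by (rule caseC)
  show ?thesis
  proof (intro conjI impI allI ballI)
    fix m \<tau> t assume "\<forall>m<length ps. \<forall>\<tau>\<in>Tau. \<forall>t. diagonal_mat (Sigma_m M ps m Z t \<tau>)" "m < length ps" "\<tau> \<in> Tau"
    then show "diagonal_mat (transpose_mat (U m) * Sigma_m M ps m Xst t \<tau> * U m)" using 1 by blast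
  next
    fix m \<tau> t assume "\<forall>m<length ps. \<forall>\<tau>\<in>Tau. \<forall>t. diagonal_mat (B_m M ps m Z t \<tau>)" "m < length ps" "\<tau> \<in> Tau"
    then show "diagonal_mat (transpose_mat (U m) * B_m M ps m Xst t \<tau> * U m)" using 2 by blast
  next
    fix m i j \<tau> t assume h: "\<forall>m<length ps. \<forall>i<ps ! m. \<forall>j<ps ! m. \<forall>\<tau>\<in>Tau. \<forall>t. diagonal_mat (C_m M ps m Z t \<tau> i j)"
      and m: "m < length ps" and i: "i < ps ! m" and j: "j < ps ! m" and \<tau>: "\<tau> \<in> Tau"
    have "\<forall>k < ps ! m. \<forall>l < ps ! m. diagonal_mat (C_m M ps m Z t \<tau> k l)" using h m \<tau> by blast
    then show "diagonal_mat (transpose_mat (U m) * C_m M ps m Xst t \<tau> i j * U m)" by (rule 3[OF m i j])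
  qed
qed


theorem theorem2:
  fixes M :: "'a measure" and ps :: "nat list" and Z :: "int \<Rightarrow> 'a \<Rightarrow> tensor"
    and \<Omega> U :: "nat \<Rightarrow> real mat" and c :: real and Tau :: "int set"
    and X Xst :: "int \<Rightarrow> 'a \<Rightarrow> tensor"
  assumes P: "prob_space M"
    and r_pos: "length ps \<ge> 1"
    and p_pos: "\<forall>k < length ps. ps ! k \<ge> 1"
    and Z_meas: "\<forall>t. \<forall>is \<in> tidx ps. (\<lambda>\<omega>. Z t \<omega> is) \<in> borel_measurable M"
    and Z_4mom: "\<forall>t. \<forall>is \<in> tidx ps. integrable M (\<lambda>\<omega>. (Z t \<omega> is) ^ 4)"
    and Z_mean: "\<forall>t. \<forall>is \<in> tidx ps. integral\<^sup>L M (\<lambda>\<omega>. Z t \<omega> is) = 0"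
    and Z_cov: "\<forall>t. \<forall>is \<in> tidx ps. \<forall>js \<in> tidx ps.
        integral\<^sup>L M (\<lambda>\<omega>. (Z t \<omega> is - integral\<^sup>L M (\<lambda>\<omega>'. Z t \<omega>' is))
                         * (Z t \<omega> js - integral\<^sup>L M (\<lambda>\<omega>'. Z t \<omega>' js)))
        = (if is = js then 1 else 0)"
    and Omega: "\<forall>m < length ps. \<Omega> m \<in> carrier_mat (ps ! m) (ps ! m) \<and> invertible_mat (\<Omega> m)"
    and X_def: "X = (\<lambda>t \<omega>. mode_prods ps \<Omega> (Z t \<omega>))"
    and Xst_def: "Xst = (\<lambda>t \<omega>. mode_prods ps (\<lambda>m. inv_sqrt_mat (Sigma_m M ps m X t 0)) (X t \<omega>))"
    and c_pos: "c > 0"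
    and U_orth: "\<forall>m < length ps. U m \<in> carrier_mat (ps ! m) (ps ! m)
                   \<and> transpose_mat (U m) * U m = 1\<^sub>m (ps ! m)"
    and Xst_eq: "\<forall>t. \<forall>\<omega> \<in> space M. \<forall>is \<in> tidx ps.
                   Xst t \<omega> is = c * mode_prods ps U (Z t \<omega>) is"
  shows
    "((\<forall>m < length ps. \<forall>\<tau> \<in> Tau. \<forall>t. diagonal_mat (Sigma_m M ps m Z t \<tau>))
        \<longrightarrow> (\<forall>m < length ps. \<forall>\<tau> \<in> Tau. \<forall>t.
              diagonal_mat (transpose_mat (U m) * Sigma_m M ps m Xst t \<tau> * U m)))
   \<and> ((\<forall>m < length ps. \<forall>\<tau> \<in> Tau. \<forall>t. diagonal_mat (B_m M ps m Z t \<tau>))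
        \<longrightarrow> (\<forall>m < length ps. \<forall>\<tau> \<in> Tau. \<forall>t.
              diagonal_mat (transpose_mat (U m) * B_m M ps m Xst t \<tau> * U m)))
   \<and> ((\<forall>m < length ps. \<forall>i < ps ! m. \<forall>j < ps ! m. \<forall>\<tau> \<in> Tau. \<forall>t.
          diagonal_mat (C_m M ps m Z t \<tau> i j))
        \<longrightarrow> (\<forall>m < length ps. \<forall>i < ps ! m. \<forall>j < ps ! m. \<forall>\<tau> \<in> Tau. \<forall>t.
              diagonal_mat (transpose_mat (U m) * C_m M ps m Xst t \<tau> i j * U m)))"
proof -
  have T: "tsetup M ps Z U c Xst"
    unfolding tsetup_def zsetup_def tsetup_axioms_def
    using P Z_meas Z_4mom p_pos Z_mean Z_cov U_orth Xst_eq by blast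
  show ?thesis by (rule theorem2_aux[OF T])
qed

end
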